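(* In the setting described in the context, let $\mathcal{X}_t(\{\bm{x}_0\})$ be the integrator reach set with time-varying input range $[u_{\min}(s),u_{\max}(s)]$, $s\in[0,t]$. Then every boundary point $\bm{x}^{\rm bdy}\in\partial\mathcal{X}_t(\{\bm{x}_0\})$ admits the parameterization, for some $\bm{\sigma}=(\sigma_1,\dots,\sigma_{n-1})\in\mathcal{W}_t$ and some choice of overall sign $\epsilon\in\{+1,-1\}$, $$\bm{x}^{\rm bdy}(\bm{\sigma})=\bm{\chi}(t,\bm{x}_0)+\int_0^t\nu(s)\bm{\xi}(t-s)\,{\rm d}s+\epsilon\sum_{i=1}^{n}(-1)^{i-1}\int_{\sigma_{i-1}}^{\sigma_i}\mu(s)\bm{\xi}(t-s)\,{\rm d}s,$$ with the convention $\sigma_0:=0$, $\sigma_n:=t$.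
   Context: Let $\bm{A}\in\mathbb{R}^{n\times n}$, $\bm{b}\in\mathbb{R}^n$ with $(\bm{A},\bm{b})$ controllable and $\bm{A}$ having $n$ distinct eigenvalues; let $v_{\min}\le v_{\max}$ be constants, $\bm{z}_0\in\mathbb{R}^n$, $t>0$, and $\bm{x}_0:=\bm{M}\bm{z}_0$. Here $\bm{C}=(\bm{b},\bm{A}\bm{b},\dots,\bm{A}^{n-1}\bm{b})$, $\bm{q}^\top$ is the last row of $\bm{C}^{-1}$, $\bm{M}$ has rows $\bm{q}^\top,\bm{q}^\top\bm{A},\dots,\bm{q}^\top\bm{A}^{n-1}$; $\bm{c}=(c_0,\dots,c_{n-1})^\top$ are the coefficients of the characteristic polynomial $\lambda^n+c_{n-1}\lambda^{n-1}+\dots+c_0$ of $\bm{A}$; $\bm{A}_{\rm con}=\bm{M}\bm{A}\bm{M}^{-1}$ is the companion matrix with first $n-1$ rows $(\bm{0}\ \bm{I}_{n-1})$ and last row $-\bm{c}^\top$; $\bm{b}_{\rm con}=(0,\dots,0,1)^\top$; $\bm{A}_{\rm int}$ has first $n-1$ rows $(\bm{0}\ \bm{I}_{n-1})$ and last row zero. For $0\le s\le t$, with $f(\tau)=\langle\bm{c},e^{(s-\tau)\bm{A}_{\rm con}}\bm{b}_{\rm con}\rangle$ and $I(v)=v(s)-\int_0^s f(\tau)v(\tau)\,{\rm d}\tau$, let $I_{\min}(s),I_{\max}(s)$ be the inf and sup of $I(v)$ over $v\in C([0,s])$ with $v_{\min}\le v\le v_{\max}$, and $u_{\min}(s)=-\langle\bm{c},e^{s\bm{A}_{\rm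 con}}\bm{M}\bm{z}_0\rangle+I_{\min}(s)$, $u_{\max}(s)=-\langle\bm{c},e^{s\bm{A}_{\rm con}}\bm{M}\bm{z}_0\rangle+I_{\max}(s)$. The integrator reach set $\mathcal{X}_t(\{\bm{x}_0\})$ is the set of $\bm{x}(t)$ with $\dot{\bm{x}}=\bm{A}_{\rm int}\bm{x}+\bm{b}_{\rm con}u$, $\bm{x}(0)=\bm{x}_0$, $u\in C([0,t])$, $u_{\min}(s)\le u(s)\le u_{\max}(s)$ for all $s$. Define $\mu(s):=(u_{\max}(s)-u_{\min}(s))/2$, $\nu(s):=(u_{\max}(s)+u_{\min}(s))/2$, $\bm{\xi}(s):=\big(\tfrac{s^{n-1}}{(n-1)!},\tfrac{s^{n-2}}{(n-2)!},\dots,s,1\big)^\top$, and $\bm{\chi}(t,\bm{x}_0)\in\mathbb{R}^n$ componentwise by $\chi_k=\sum_{\ell=k}^{n}\frac{t^{\ell-k}}{(\ell-k)!}x_{\ell0}$, $k=1,\dots,n$, where $x_{\ell 0}$ is the $\ell$-th component of $\bm{x}_0$. The Weyl chamber is $\mathcal{W}_t:=\{\bm{\sigma}\in\mathbb{R}^{n-1}\mid 0\le\sigma_1\le\dots\le\sigma_{n-1}\le t\}$. *)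

theory Defs
  imports "HOL-Analysis.Analysis"
begin

type_synonym 'n rvec = "(real, 'n) vec"
type_synonym 'n rmat = "((real, 'n) vec, 'n) vec"

text \<open>Coordinates of R^n are indexed by a finite, well-ordered type 'n (n = CARD('n));
  the k-th coordinate (1-based) is the element of 'n at 0-based position k-1.\<close>

definition pos :: "'n::{finite,wellorder} \<Rightarrow> nat" where
  "pos k = card {j. j < k}"

primrec mpow :: "('n::finite) rmat \<Rightarrow> nat \<Rightarrow> 'n rmat" where
  "mpow A 0 = mat 1"
| "mpow A (Suc k) = A ** mpow A k"

definition mexp :: "('n::finite) rmat \<Rightarrow> 'n rmat" where
  "mexp A = (\<chi> i j. (\<Sum>k. (mpow A k) $ i $ j / fact k))"

definition ctrb :: "('n::{finite,wellorder}) rmat \<Rightarrow> 'n rvec \<Rightarrow> 'n rmat" where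
  "ctrb A b = (\<chi> i j. (mpow A (pos j) *v b) $ i)"

definition controllable :: "('n::{finite,wellorder}) rmat \<Rightarrow> 'n rvec \<Rightarrow> bool" where
  "controllable A b \<longleftrightarrow> rank (ctrb A b) = CARD('n)"

definition qvec :: "('n::{finite,wellorder}) rmat \<Rightarrow> 'n rvec \<Rightarrow> 'n rvec" where
  "qvec A b = matrix_inv (ctrb A b) $ Max (UNIV :: 'n set)"

definition Mmat :: "('n::{finite,wellorder}) rmat \<Rightarrow> 'n rvec \<Rightarrow> 'n rmat" where
  "Mmat A b = (\<chi> i. qvec A b v* mpow A (pos i))"

definition charcoef :: "('n::{finite,wellorder}) rmat \<Rightarrow> 'n rvec" where
  "charcoef A = (SOME c. \<forall>x::real. det (mat x - A) = x ^ CARD('n) + (\<Sum>j\<in>UNIV. c $ j * x ^ pos j))"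

definition distinct_eigenvalues :: "('n::{finite,wellorder}) rmat \<Rightarrow> bool" where
  "distinct_eigenvalues A \<longleftrightarrow>
     card {z::complex. det (mat z - (\<chi> i j. complex_of_real (A $ i $ j))) = 0} = CARD('n)"

definition Acon :: "('n::{finite,wellorder}) rmat \<Rightarrow> 'n rmat" where
  "Acon A = (\<chi> i j. if pos i < CARD('n) - 1 then (if pos j = pos i + 1 then 1 else 0)
                     else - (charcoef A $ j))"

definition Aint :: "('n::{finite,wellorder}) rmat" where
  "Aint = (\<chi> i j. if pos i < CARD('n) - 1 then (if pos j = pos i + 1 then 1 else 0) else 0)"

definition bcon :: "('n::{finite,wellorder}) rvec" where
  "bcon = (\<chi> i. if pos i = CARD('n) - 1 then 1 else 0)"

definition fker :: "('n::{finite,wellorder}) rmat \<Rightarrow> real \<Rightarrow> real \<Rightarrow> real" where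
  "fker A s \<tau> = inner (charcoef A) (mexp ((s - \<tau>) *\<^sub>R Acon A) *v (bcon :: 'n rvec))"

definition Ifun :: "('n::{finite,wellorder}) rmat \<Rightarrow> real \<Rightarrow> (real \<Rightarrow> real) \<Rightarrow> real" where
  "Ifun A s v = v s - integral {0..s} (\<lambda>\<tau>. fker A s \<tau> * v \<tau>)"

definition Ivals :: "('n::{finite,wellorder}) rmat \<Rightarrow> real \<Rightarrow> real \<Rightarrow> real \<Rightarrow> real set" where
  "Ivals A vmin vmax s = {Ifun A s v | v. continuous_on {0..s} v \<and>
                              (\<forall>\<tau>\<in>{0..s}. vmin \<le> v \<tau> \<and> v \<tau> \<le> vmax)}"

definition Imin :: "('n::{finite,wellorder}) rmat \<Rightarrow> real \<Rightarrow> real \<Rightarrow> real \<Rightarrow> real" where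
  "Imin A vmin vmax s = Inf (Ivals A vmin vmax s)"

definition Imax :: "('n::{finite,wellorder}) rmat \<Rightarrow> real \<Rightarrow> real \<Rightarrow> real \<Rightarrow> real" where
  "Imax A vmin vmax s = Sup (Ivals A vmin vmax s)"

definition umin :: "('n::{finite,wellorder}) rmat \<Rightarrow> 'n rvec \<Rightarrow> real \<Rightarrow> real \<Rightarrow> 'n rvec \<Rightarrow> real \<Rightarrow> real" where
  "umin A b vmin vmax z0 s =
     - inner (charcoef A) (mexp (s *\<^sub>R Acon A) *v (Mmat A b *v z0)) + Imin A vmin vmax s"

definition umax :: "('n::{finite,wellorder}) rmat \<Rightarrow> 'n rvec \<Rightarrow> real \<Rightarrow> real \<Rightarrow> 'n rvec \<Rightarrow> real \<Rightarrow> real" where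
  "umax A b vmin vmax z0 s =
     - inner (charcoef A) (mexp (s *\<^sub>R Acon A) *v (Mmat A b *v z0)) + Imax A vmin vmax s"

definition int_reach :: "real \<Rightarrow> ('n::{finite,wellorder}) rvec \<Rightarrow> (real \<Rightarrow> real) \<Rightarrow> (real \<Rightarrow> real) \<Rightarrow> ('n rvec) set" where
  "int_reach t x0 ulo uhi =
     {x t | x u. continuous_on {0..t} u \<and> (\<forall>s\<in>{0..t}. ulo s \<le> u s \<and> u s \<le> uhi s) \<and>
        x 0 = x0 \<and>
        (\<forall>s\<in>{0..t}. (x has_vector_derivative (Aint *v x s + u s *\<^sub>R bcon)) (at s within {0..t}))}"

definition xi :: "real \<Rightarrow> ('n::{finite,wellorder}) rvec" where
  "xi s = (\<chi> k. s ^ (CARD('n) - 1 - pos k) / fact (CARD('n) - 1 - pos k))"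

definition chi_vec :: "real \<Rightarrow> ('n::{finite,wellorder}) rvec \<Rightarrow> 'n rvec" where
  "chi_vec t x0 = (\<chi> k. \<Sum>l\<in>{l. pos k \<le> pos l}. t ^ (pos l - pos k) / fact (pos l - pos k) * x0 $ l)"

end

theory Submission
  imports Defs "HOL-Computational_Algebra.Polynomial"
begin
lemma pos_less_card: "pos (k::'n::{finite,wellorder}) < CARD('n)"
proof -
  have "{j. j < k} \<subset> (UNIV::'n set)" by auto
  then show ?thesis unfolding pos_def by (simp add: psubset_card_mono)
qed

lemma pos_strict_mono: "(j::'n::{finite,wellorder}) < k \<Longrightarrow> pos j < pos k"
  unfolding pos_def by (rule psubset_card_mono) auto

lemma pos_inj: "inj (pos :: 'n::{finite,wellorder} \<Rightarrow> nat)"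
  by (metis injI linorder_neqE pos_strict_mono less_irrefl)

lemma pos_eq_iff[simp]: "pos (j::'n::{finite,wellorder}) = pos k \<longleftrightarrow> j = k"
  using pos_inj by (auto dest: injD)

lemma pos_image: "pos ` (UNIV :: 'n::{finite,wellorder} set) = {..<CARD('n)}"
proof -
  have "pos ` (UNIV :: 'n set) \<subseteq> {..<CARD('n)}" using pos_less_card by auto
  moreover have "card (pos ` (UNIV :: 'n set)) = CARD('n)"
    using pos_inj by (metis card_image)
  ultimately show ?thesis by (simp add: card_subset_eq)
qed

definition ix :: "nat \<Rightarrow> 'n::{finite,wellorder}" where "ix j = inv pos j"

lemma pos_ix: "j < CARD('n) \<Longrightarrow> pos (ix j :: 'n::{finite,wellorder}) = j"
  unfolding ix_def by (metis f_inv_into_f lessThan_iff pos_image)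

lemma ix_pos[simp]: "ix (pos k) = (k::'n::{finite,wellorder})"
  unfolding ix_def by (simp add: pos_inj)

lemma Aint_mult: "(Aint *v x) $ i = (if pos i < CARD('n) - 1 then x $ ix (pos i + 1) else 0)"
  for x :: "'n::{finite,wellorder} rvec"
proof (cases "pos i < CARD('n) - 1")
  case True
  have e: "pos j = pos i + 1 \<longleftrightarrow> j = ix (pos i + 1)" for j :: 'n
    using True by (metis ix_pos pos_ix less_diff_conv)
  have "(Aint *v x) $ i = (\<Sum>j\<in>UNIV. if j = ix (pos i + 1) then x $ j else 0)"
    unfolding matrix_vector_mult_def Aint_def using True
    by (simp add: e[simplified] if_distrib[of "\<lambda>z. z * _"] cong: if_cong)
  then show ?thesis using True by simp
next
  case False
  then show ?thesis unfolding matrix_vector_mult_def Aint_def by simp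
qed

lemma bcon_nth: "(bcon :: 'n::{finite,wellorder} rvec) $ i = (if pos i = CARD('n) - 1 then 1 else 0)"
  unfolding bcon_def by simp

definition efun :: "'n::{finite,wellorder} \<Rightarrow> 'n \<Rightarrow> real \<Rightarrow> real" where
  "efun k l r = (if pos k \<le> pos l then r ^ (pos l - pos k) / fact (pos l - pos k) else 0)"

definition efun' :: "'n::{finite,wellorder} \<Rightarrow> 'n \<Rightarrow> real \<Rightarrow> real" where
  "efun' k l r = (if pos k < pos l then r ^ (pos l - pos k - 1) / fact (pos l - pos k - 1) else 0)"

lemma efun_deriv: "((efun k l) has_real_derivative efun' k l r) (at r)"
proof (cases "pos k < pos l")
  case True
  then obtain m where m: "pos l - pos k = Suc m" by (metis Suc_diff_Suc)
  have "((\<lambda>r. r ^ Suc m) has_real_derivative real (Suc m) * r ^ m) (at r)"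
    using DERIV_pow[of "Suc m" r] by simp
  then have "((\<lambda>r. r ^ Suc m / fact (Suc m)) has_real_derivative (real (Suc m) * r ^ m) / fact (Suc m)) (at r)"
    by (rule DERIV_cdivide)
  moreover have "(real (Suc m) * r ^ m) / fact (Suc m) = r ^ m / fact m"
    by (simp add: fact_Suc del: of_nat_Suc)
  ultimately show ?thesis using True m unfolding efun_def efun'_def by simp
next
  case False
  then have "efun k l = (\<lambda>r. if k = l then 1 else 0)"
    unfolding efun_def using False by (auto simp: fun_eq_iff)
  then show ?thesis using False unfolding efun'_def by simp
qed

lemma efun_zero: "efun k l 0 = (if l = k then 1 else 0)"
  unfolding efun_def by (auto simp: le_less)

lemma efun_bcon: "(\<Sum>l\<in>UNIV. efun k l r * (bcon :: 'n::{finite,wellorder} rvec) $ l) = (xi r :: 'n rvec) $ k"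
proof -
  have n0: "0 < CARD('n)" by simp
  let ?L = "ix (CARD('n) - 1) :: 'n"
  have pL: "pos ?L = CARD('n) - 1" using n0 by (simp add: pos_ix)
  have e: "pos l = CARD('n) - 1 \<longleftrightarrow> l = ?L" for l :: 'n
    using pL by (metis ix_pos)
  have "(\<Sum>l\<in>UNIV. efun k l r * (bcon :: 'n rvec) $ l) = (\<Sum>l\<in>UNIV. if l = ?L then efun k l r else 0)"
    by (intro sum.cong refl) (auto simp: bcon_nth e[simplified])
  also have "\<dots> = efun k ?L r" by simp
  also have "\<dots> = (xi r :: 'n rvec) $ k"
    unfolding efun_def xi_def using pL[simplified] pos_less_card[of k] by simp
  finally show ?thesis .
qed

lemma efun_Aint: "(\<Sum>l\<in>UNIV. efun k l r * (Aint *v x) $ l) = (\<Sum>j\<in>UNIV. efun' k j r * (x :: 'n::{finite,wellorder} rvec) $ j)"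
proof -
  let ?A = "{l::'n. pos l < CARD('n) - 1}"
  let ?B = "{j::'n. 0 < pos j}"
  let ?h = "\<lambda>l::'n. ix (pos l + 1) :: 'n"
  have bij: "bij_betw ?h ?A ?B"
  proof (rule bij_betw_byWitness[where f'="\<lambda>j. ix (pos j - 1)"])
    show "\<forall>a\<in>?A. ix (pos (?h a) - 1) = a" by (simp add: pos_ix)
    show "\<forall>a\<in>?B. ?h (ix (pos a - 1)) = a"
    proof
      fix a :: 'n assume a: "a \<in> ?B"
      have "pos a - 1 < CARD('n)" using pos_less_card[of a] by arith
      then have "pos (ix (pos a - 1) :: 'n) = pos a - 1" by (rule pos_ix)
      then show "?h (ix (pos a - 1)) = a" using a by simp
    qed
    show "?h ` ?A \<subseteq> ?B" by (auto simp: pos_ix)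
    show "(\<lambda>j. ix (pos j - 1)) ` ?B \<subseteq> ?A"
    proof
      fix b :: 'n assume "b \<in> (\<lambda>j. ix (pos j - 1)) ` ?B"
      then obtain a where a: "a \<in> ?B" "b = ix (pos a - 1)" by auto
      have "pos a - 1 < CARD('n)" using pos_less_card[of a] by arith
      then have "pos (ix (pos a - 1) :: 'n) = pos a - 1" by (rule pos_ix)
      then show "b \<in> ?A" using a pos_less_card[of a] by auto
    qed
  qed
  have "(\<Sum>l\<in>UNIV. efun k l r * (Aint *v x) $ l) = (\<Sum>l\<in>UNIV. if l \<in> ?A then efun k l r * x $ ?h l else 0)"
    by (intro sum.cong refl) (simp add: Aint_mult)
  also have "\<dots> = (\<Sum>l\<in>?A. efun k l r * x $ ?h l)"
    by (simp add: sum.inter_filter[symmetric])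
  also have "\<dots> = (\<Sum>l\<in>?A. efun' k (?h l) r * x $ ?h l)"
    by (intro sum.cong refl) (auto simp: efun_def efun'_def pos_ix)
  also have "\<dots> = (\<Sum>j\<in>?B. efun' k j r * x $ j)"
    using sum.reindex_bij_betw[OF bij, of "\<lambda>j. efun' k j r * x $ j"] by simp
  also have "\<dots> = (\<Sum>j\<in>UNIV. if j \<in> ?B then efun' k j r * x $ j else 0)"
    by (simp add: sum.inter_filter[symmetric])
  also have "\<dots> = (\<Sum>j\<in>UNIV. efun' k j r * x $ j)"
    by (intro sum.cong refl) (auto simp: efun'_def)
  finally show ?thesis .
qed

lemma chi_vec_efun: "chi_vec t x0 $ k = (\<Sum>l\<in>UNIV. efun k l t * x0 $ l)"
  unfolding chi_vec_def efun_def
  by (simp add: if_distrib[of "\<lambda>z. z * _"] sum.inter_filter[symmetric] cong: if_cong)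

lemma vec_nth_vector_derivative:
  "(x has_vector_derivative D) F \<Longrightarrow> ((\<lambda>s. x s $ l) has_vector_derivative D $ l) F"
  using bounded_linear.has_vector_derivative[OF bounded_linear_vec_nth] by blast

lemma reach_repr:
  fixes x :: "real \<Rightarrow> 'n::{finite,wellorder} rvec"
  assumes t: "t \<ge> 0" and u: "continuous_on {0..t} u"
    and d: "\<forall>s\<in>{0..t}. (x has_vector_derivative (Aint *v x s + u s *\<^sub>R bcon)) (at s within {0..t})"
  shows "((\<lambda>s. u s *\<^sub>R xi (t - s)) has_integral (x t - chi_vec t (x 0))) {0..t}"
proof -
  have comp: "((\<lambda>s. u s * xi (t - s) $ k) has_integral (x t $ k - chi_vec t (x 0) $ k)) {0..t}" for k
  proof -
    define \<phi> where "\<phi> s = (\<Sum>l\<in>UNIV. efun k l (t - s) * x s $ l)" for s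
    have "((\<lambda>s. u s * xi (t - s) $ k) has_integral (\<phi> t - \<phi> 0)) {0..t}"
    proof (rule fundamental_theorem_of_calculus[OF t])
      fix s assume s: "s \<in> {0..t}"
      let ?D = "Aint *v x s + u s *\<^sub>R bcon"
      have dl: "((\<lambda>s. x s $ l) has_vector_derivative ?D $ l) (at s within {0..t})" for l
        using d s vec_nth_vector_derivative by blast
      have el: "((\<lambda>s. efun k l (t - s)) has_real_derivative (- efun' k l (t - s))) (at s within {0..t})" for l
      proof -
        have g: "((\<lambda>s. t - s) has_real_derivative -1) (at s within {0..t})"
          by (auto intro!: derivative_eq_intros)
        show ?thesis
          using DERIV_chain2[where f="efun k l" and g="\<lambda>s. t - s", OF efun_deriv g] by simp
      qed
      have "(\<phi> has_real_derivative (\<Sum>l\<in>UNIV. efun k l (t - s) * ?D $ l + (- efun' k l (t - s)) * x s $ l)) (at s within {0..t})"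
        unfolding \<phi>_def
        apply (rule DERIV_sum)
        apply (rule DERIV_mult'[OF el])
        using dl by (simp add: has_real_derivative_iff_has_vector_derivative)
      moreover have "(\<Sum>l\<in>UNIV. efun k l (t - s) * ?D $ l + (- efun' k l (t - s)) * x s $ l) = u s * xi (t - s) $ k"
      proof -
        have "(\<Sum>l\<in>UNIV. efun k l (t - s) * ?D $ l + (- efun' k l (t - s)) * x s $ l)
          = (\<Sum>l\<in>UNIV. efun k l (t - s) * (Aint *v x s) $ l) + u s * (\<Sum>l\<in>UNIV. efun k l (t - s) * (bcon::'n rvec) $ l)
            - (\<Sum>l\<in>UNIV. efun' k l (t - s) * x s $ l)"
          by (simp add: sum.distrib sum_subtractf sum_distrib_left algebra_simps)
        then show ?thesis by (simp add: efun_Aint efun_bcon)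
      qed
      ultimately show "(\<phi> has_vector_derivative u s * xi (t - s) $ k) (at s within {0..t})"
        by (simp add: has_real_derivative_iff_has_vector_derivative)
    qed
    moreover have "\<phi> t = x t $ k" unfolding \<phi>_def by (simp add: efun_zero if_distrib[of "\<lambda>z. z * _"] cong: if_cong)
    moreover have "\<phi> 0 = chi_vec t (x 0) $ k" unfolding \<phi>_def chi_vec_efun by simp
    ultimately show ?thesis by simp
  qed
  have int: "(\<lambda>s. u s *\<^sub>R (xi (t - s) :: 'n rvec)) integrable_on {0..t}"
    by (rule integrable_continuous_real)
      (auto intro!: continuous_intros u simp: xi_def continuous_on_vec_lambda)
  have "integral {0..t} (\<lambda>s. u s *\<^sub>R (xi (t - s) :: 'n rvec)) = x t - chi_vec t (x 0)"
  proof (rule vec_eq_iff[THEN iffD2], rule allI)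
    fix k
    have "integral {0..t} (\<lambda>s. u s *\<^sub>R (xi (t - s) :: 'n rvec)) $ k = integral {0..t} (\<lambda>s. u s * xi (t - s) $ k)"
      using integral_linear[OF int bounded_linear_vec_nth[of k]] by (simp add: o_def)
    then show "integral {0..t} (\<lambda>s. u s *\<^sub>R (xi (t - s) :: 'n rvec)) $ k = (x t - chi_vec t (x 0)) $ k"
      using comp[of k] by (simp add: integral_unique)
  qed
  then show ?thesis using int by (metis has_integral_integral)
qed

lemma vec_has_vector_derivative:
  fixes f :: "real \<Rightarrow> ('a::{finite}) rvec"
  assumes "\<And>k. ((\<lambda>s. f s $ k) has_vector_derivative D $ k) (at a within S)"
  shows "(f has_vector_derivative D) (at a within S)"
  unfolding has_vector_derivative_def
  apply (subst has_derivative_componentwise_within)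
  using assms by (auto simp: Basis_vec_def inner_axis has_vector_derivative_def)

primrec Ysol :: "(real \<Rightarrow> real) \<Rightarrow> (nat \<Rightarrow> real) \<Rightarrow> nat \<Rightarrow> real \<Rightarrow> real" where
  "Ysol u c 0 s = c 0 + integral {0..s} u"
| "Ysol u c (Suc m) s = c (Suc m) + integral {0..s} (Ysol u c m)"

lemma Ysol_props:
  assumes u: "continuous_on {0..t} u"
  shows "continuous_on {0..t} (Ysol u c m) \<and> Ysol u c m 0 = c m \<and>
         (\<forall>s\<in>{0..t}. (Ysol u c m has_vector_derivative (if m = 0 then u s else Ysol u c (m - 1) s)) (at s within {0..t}))"
proof (induction m)
  case 0
  have e: "Ysol u c 0 = (\<lambda>s. c 0 + integral {0..s} u)" by (rule ext) simp
  have d: "\<forall>s\<in>{0..t}. (Ysol u c 0 has_vector_derivative u s) (at s within {0..t})"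
    unfolding e using integral_has_vector_derivative[OF u]
    by (auto intro!: derivative_eq_intros simp: has_vector_derivative_def)
  then have "continuous_on {0..t} (Ysol u c 0)"
    using continuous_on_eq_continuous_within has_vector_derivative_continuous by blast
  moreover have "Ysol u c 0 0 = c 0" by simp
  ultimately show ?case using d by (simp del: Ysol.simps)
next
  case (Suc m)
  then have cm: "continuous_on {0..t} (Ysol u c m)" by blast
  have e: "Ysol u c (Suc m) = (\<lambda>s. c (Suc m) + integral {0..s} (Ysol u c m))" by (rule ext) simp
  have d: "\<forall>s\<in>{0..t}. (Ysol u c (Suc m) has_vector_derivative Ysol u c m s) (at s within {0..t})"
    unfolding e using integral_has_vector_derivative[OF cm]
    by (auto intro!: derivative_eq_intros simp: has_vector_derivative_def)
  then have "continuous_on {0..t} (Ysol u c (Suc m))"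
    using continuous_on_eq_continuous_within has_vector_derivative_continuous by blast
  moreover have "Ysol u c (Suc m) 0 = c (Suc m)" by simp
  ultimately show ?case using d by (simp del: Ysol.simps)
qed

lemma reach_exists:
  fixes x0 :: "'n::{finite,wellorder} rvec"
  assumes u: "continuous_on {0..t} u"
  shows "\<exists>x::real \<Rightarrow> 'n rvec. x 0 = x0 \<and> (\<forall>s\<in>{0..t}. (x has_vector_derivative (Aint *v x s + u s *\<^sub>R bcon)) (at s within {0..t}))"
proof -
  define c where "c m = x0 $ (ix (CARD('n) - 1 - m) :: 'n)" for m
  define x where "x s = (\<chi> k::'n. Ysol u c (CARD('n) - 1 - pos k) s)" for s :: real
  have x0: "x 0 = x0"
  proof (rule vec_eq_iff[THEN iffD2], rule allI)
    fix k :: 'n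
    have e: "CARD('n) - 1 - (CARD('n) - 1 - pos k) = pos k" using pos_less_card[of k] by arith
    have "x 0 $ k = c (CARD('n) - 1 - pos k)" unfolding x_def using Ysol_props[OF u] by simp
    then show "x 0 $ k = x0 $ k" unfolding c_def e by simp
  qed
  have "(x has_vector_derivative (Aint *v x s + u s *\<^sub>R bcon)) (at s within {0..t})" if s: "s \<in> {0..t}" for s
  proof (rule vec_has_vector_derivative)
    fix k :: 'n
    have pk: "pos k < CARD('n)" by (rule pos_less_card)
    have D: "(Ysol u c (CARD('n) - 1 - pos k) has_vector_derivative
        (if CARD('n) - 1 - pos k = 0 then u s else Ysol u c (CARD('n) - 1 - pos k - 1) s)) (at s within {0..t})"
      using Ysol_props[OF u] s by blast
    have "(Aint *v x s + u s *\<^sub>R bcon) $ k = (if CARD('n) - 1 - pos k = 0 then u s else Ysol u c (CARD('n) - 1 - pos k - 1) s)"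
    proof (cases "pos k < CARD('n) - 1")
      case True
      then have "pos (ix (pos k + 1) :: 'n) = pos k + 1" by (intro pos_ix) arith
      then show ?thesis using True by (auto simp: Aint_mult bcon_nth x_def)
    next
      case False
      then show ?thesis using pk by (simp add: Aint_mult bcon_nth x_def)
    qed
    then show "((\<lambda>s. x s $ k) has_vector_derivative (Aint *v x s + u s *\<^sub>R bcon) $ k) (at s within {0..t})"
      using D by (simp add: x_def)
  qed
  with x0 show ?thesis by blast
qed

lemma int_reach_convex:
  assumes "\<forall>s\<in>{0..t}. lo s \<le> hi s"
  shows "convex (int_reach t x0 lo hi)"
  unfolding convex_def
proof (intro ballI allI impI)
  fix y1 y2 and a b :: real
  assume y1: "y1 \<in> int_reach t x0 lo hi" and y2: "y2 \<in> int_reach t x0 lo hi" and ab: "0 \<le> a" "0 \<le> b" "a + b = 1"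
  obtain x1 u1 where 1: "y1 = x1 t" "continuous_on {0..t} u1" "\<forall>s\<in>{0..t}. lo s \<le> u1 s \<and> u1 s \<le> hi s" "x1 0 = x0"
    "\<forall>s\<in>{0..t}. (x1 has_vector_derivative (Aint *v x1 s + u1 s *\<^sub>R bcon)) (at s within {0..t})"
    using y1 unfolding int_reach_def by blast
  obtain x2 u2 where 2: "y2 = x2 t" "continuous_on {0..t} u2" "\<forall>s\<in>{0..t}. lo s \<le> u2 s \<and> u2 s \<le> hi s" "x2 0 = x0"
    "\<forall>s\<in>{0..t}. (x2 has_vector_derivative (Aint *v x2 s + u2 s *\<^sub>R bcon)) (at s within {0..t})"
    using y2 unfolding int_reach_def by blast
  define x where "x s = a *\<^sub>R x1 s + b *\<^sub>R x2 s" for s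
  define u where "u s = a * u1 s + b * u2 s" for s
  have "continuous_on {0..t} u" unfolding u_def using 1(2) 2(2) by (intro continuous_intros)
  moreover have "\<forall>s\<in>{0..t}. lo s \<le> u s \<and> u s \<le> hi s"
  proof
    fix s assume s: "s \<in> {0..t}"
    have "lo s = a * lo s + b * lo s" "hi s = a * hi s + b * hi s" using ab(3) by (metis distrib_right mult_1)+
    moreover have "a * lo s \<le> a * u1 s" "b * lo s \<le> b * u2 s" "a * u1 s \<le> a * hi s" "b * u2 s \<le> b * hi s"
      using 1(3) 2(3) s ab by (auto intro: mult_left_mono)
    ultimately show "lo s \<le> u s \<and> u s \<le> hi s" unfolding u_def by linarith
  qed
  moreover have "x 0 = x0" unfolding x_def using 1(4) 2(4) ab(3) by (simp add: scaleR_add_left[symmetric])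
  moreover have "\<forall>s\<in>{0..t}. (x has_vector_derivative (Aint *v x s + u s *\<^sub>R bcon)) (at s within {0..t})"
  proof
    fix s assume s: "s \<in> {0..t}"
    have "(x has_vector_derivative a *\<^sub>R (Aint *v x1 s + u1 s *\<^sub>R bcon) + b *\<^sub>R (Aint *v x2 s + u2 s *\<^sub>R bcon)) (at s within {0..t})"
      unfolding x_def using 1(5) 2(5) s by (intro has_vector_derivative_add bounded_linear.has_vector_derivative[OF bounded_linear_scaleR_right]) auto
    moreover have "a *\<^sub>R (Aint *v x1 s + u1 s *\<^sub>R bcon) + b *\<^sub>R (Aint *v x2 s + u2 s *\<^sub>R bcon) = Aint *v x s + u s *\<^sub>R bcon"
      unfolding x_def u_def by (simp add: matrix_vector_right_distrib matrix_vector_mult_scaleR algebra_simps scaleR_add_left)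
    ultimately show "(x has_vector_derivative (Aint *v x s + u s *\<^sub>R bcon)) (at s within {0..t})" by simp
  qed
  ultimately have "x t \<in> int_reach t x0 lo hi" unfolding int_reach_def by blast
  then show "a *\<^sub>R y1 + b *\<^sub>R y2 \<in> int_reach t x0 lo hi" unfolding x_def 1(1) 2(1) .
qed

lemma frontier_support:
  fixes S :: "'a::euclidean_space set"
  assumes cS: "convex S" and x: "x \<in> frontier S"
  shows "\<exists>a. a \<noteq> 0 \<and> (\<forall>y\<in>S. a \<bullet> y \<le> a \<bullet> x)"
proof (cases "interior S = {}")
  case True
  then obtain a b where a: "a \<noteq> 0" "S \<subseteq> {x. a \<bullet> x = b}"
    using empty_interior_subset_hyperplane[OF cS] by metis
  have "closure S \<subseteq> {x. a \<bullet> x = b}"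
    using a(2) by (intro closure_minimal) (auto simp: closed_hyperplane)
  moreover have "x \<in> closure S" using x by (simp add: frontier_def)
  ultimately have "a \<bullet> x = b" by auto
  then have "\<forall>y\<in>S. a \<bullet> y \<le> a \<bullet> x" using a(2) by auto
  then show ?thesis using a(1) by blast
next
  case False
  then have "rel_interior S = interior S"
    using interior_rel_interior_gen[of S] by (metis interior_rel_interior)
  then have "x \<notin> rel_interior S" "x \<in> closure S" using x by (auto simp: frontier_def)
  then obtain a where "a \<noteq> 0" "\<And>y. y \<in> closure S \<Longrightarrow> a \<bullet> x \<le> a \<bullet> y"
    using supporting_hyperplane_relative_frontier[OF cS] by metis
  then show ?thesis
    by (intro exI[of _ "-a"]) (auto intro: closure_subset[THEN subsetD])
qed

lemma const_sign:
  fixes g :: "real \<Rightarrow> real"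
  assumes g: "continuous_on {a..b} g" and nz: "\<forall>s. a < s \<and> s < b \<longrightarrow> g s \<noteq> 0"
  shows "\<exists>e\<in>{1,-1::real}. \<forall>s. a < s \<and> s < b \<longrightarrow> 0 \<le> e * g s"
proof -
  have *: False if h: "a < s1" "s1 < b" "a < s2" "s2 < b" "g s1 < 0" "0 < g s2" for s1 s2
  proof (cases "s1 \<le> s2")
    case True
    have "continuous_on {s1..s2} g" using g h by (auto intro: continuous_on_subset)
    then obtain z where "s1 \<le> z" "z \<le> s2" "g z = 0" using IVT'[of g s1 0 s2] True h by auto
    then show False using nz h by force
  next
    case False
    have "continuous_on {s2..s1} g" using g h by (auto intro: continuous_on_subset)
    then obtain z where "s2 \<le> z" "z \<le> s1" "g z = 0" using IVT2'[of g s1 0 s2] False h by auto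
    then show False using nz h by force
  qed
  show ?thesis
  proof (cases "\<exists>s. a < s \<and> s < b \<and> g s < 0")
    case True
    then obtain s1 where "a < s1" "s1 < b" "g s1 < 0" by blast
    then have "\<forall>s. a < s \<and> s < b \<longrightarrow> 0 \<le> (-1) * g s" using * by force
    then show ?thesis by blast
  next
    case False
    then have "\<forall>s. a < s \<and> s < b \<longrightarrow> 0 \<le> 1 * g s" by force
    then show ?thesis by blast
  qed
qed

lemma sign_pieces:
  fixes g :: "real \<Rightarrow> real"
  assumes "continuous_on {a..b} g" "a \<le> b" "finite {s. a < s \<and> s < b \<and> g s = 0}"
    "card {s. a < s \<and> s < b \<and> g s = 0} < N"
  shows "\<exists>\<sigma> \<epsilon>. \<epsilon> \<in> {1,-1::real} \<and> \<sigma> 0 = a \<and> \<sigma> N = b \<and> (\<forall>i<N. \<sigma> i \<le> \<sigma> (Suc i)) \<and>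
     (\<forall>i\<in>{1..N}. \<forall>s. \<sigma> (i-1) < s \<and> s < \<sigma> i \<longrightarrow> 0 \<le> \<epsilon> * (-1)^(i-1) * g s)"
  using assms
proof (induction N arbitrary: a)
  case 0
  then show ?case by simp
next
  case (Suc N)
  let ?Z = "{s. a < s \<and> s < b \<and> g s = 0}"
  show ?case
  proof (cases "?Z = {}")
    case True
    then obtain e where e: "e \<in> {1,-1::real}" "\<forall>s. a < s \<and> s < b \<longrightarrow> 0 \<le> e * g s"
      using const_sign[OF Suc.prems(1)] by blast
    define \<sigma> where "\<sigma> i = (if i = 0 then a else b)" for i :: nat
    have "\<forall>i\<in>{1..Suc N}. \<forall>s. \<sigma> (i-1) < s \<and> s < \<sigma> i \<longrightarrow> 0 \<le> e * (-1)^(i-1) * g s"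
    proof (intro ballI allI impI)
      fix i s assume i: "i \<in> {1..Suc N}" and s: "\<sigma> (i-1) < s \<and> s < \<sigma> i"
      then have "i = 1" unfolding \<sigma>_def by (auto split: if_splits)
      then show "0 \<le> e * (-1)^(i-1) * g s" using e s by (simp add: \<sigma>_def)
    qed
    moreover have "\<forall>i<Suc N. \<sigma> i \<le> \<sigma> (Suc i)" using Suc.prems(2) by (simp add: \<sigma>_def)
    ultimately show ?thesis using e(1) by (intro exI[of _ \<sigma>] exI[of _ e]) (simp add: \<sigma>_def)
  next
    case False
    define z where "z = Min ?Z"
    have finZ: "finite ?Z" using Suc.prems(3) .
    have zZ: "z \<in> ?Z" unfolding z_def using finZ False by (rule Min_in)
    have zmin: "\<And>s. s \<in> ?Z \<Longrightarrow> z \<le> s" unfolding z_def using finZ by simp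
    have az: "a < z" "z < b" "g z = 0" using zZ by auto
    have "\<forall>s. a < s \<and> s < z \<longrightarrow> g s \<noteq> 0" using zmin az by force
    then obtain e0 where e0: "e0 \<in> {1,-1::real}" "\<forall>s. a < s \<and> s < z \<longrightarrow> 0 \<le> e0 * g s"
    proof -
      have "continuous_on {a..z} g" using Suc.prems(1) az by (auto intro: continuous_on_subset)
      then show ?thesis using const_sign[of a z g] \<open>\<forall>s. a < s \<and> s < z \<longrightarrow> g s \<noteq> 0\<close> that by blast
    qed
    let ?Z' = "{s. z < s \<and> s < b \<and> g s = 0}"
    have sub: "?Z' \<subseteq> ?Z - {z}" using az by auto
    have finZ': "finite ?Z'" using finZ sub finite_subset by blast
    have "card ?Z' \<le> card (?Z - {z})" using sub finZ by (intro card_mono) auto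
    also have "\<dots> = card ?Z - 1" using zZ finZ by simp
    finally have cZ'0: "card ?Z' \<le> card ?Z - 1" .
    have "card ?Z > 0" using False finZ by (simp add: card_gt_0_iff)
    then have cZ': "card ?Z' < N" using cZ'0 Suc.prems(4) by linarith
    have cg': "continuous_on {z..b} g" using Suc.prems(1) az by (auto intro: continuous_on_subset)
    obtain \<sigma>' \<epsilon>' where IH: "\<epsilon>' \<in> {1,-1::real}" "\<sigma>' 0 = z" "\<sigma>' N = b" "\<forall>i<N. \<sigma>' i \<le> \<sigma>' (Suc i)"
      "\<forall>i\<in>{1..N}. \<forall>s. \<sigma>' (i-1) < s \<and> s < \<sigma>' i \<longrightarrow> 0 \<le> \<epsilon>' * (-1)^(i-1) * g s"
      using Suc.IH[OF cg' _ finZ' cZ'] az by fastforce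
    have N1: "1 \<le> N" using cZ' by simp
    show ?thesis
    proof (cases "e0 = \<epsilon>'")
      case True
      define \<sigma> where "\<sigma> i = (if i = 0 then a else if i \<le> N then \<sigma>' i else b)" for i
      have p: "\<forall>i\<in>{1..Suc N}. \<forall>s. \<sigma> (i-1) < s \<and> s < \<sigma> i \<longrightarrow> 0 \<le> \<epsilon>' * (-1)^(i-1) * g s"
      proof (intro ballI allI impI)
        fix i s assume i: "i \<in> {1..Suc N}" and s: "\<sigma> (i-1) < s \<and> s < \<sigma> i"
        consider "i = 1" | "2 \<le> i" "i \<le> N" | "i = Suc N" "2 \<le> i" using i N1 by fastforce
        then show "0 \<le> \<epsilon>' * (-1)^(i-1) * g s"
        proof cases
          case 1
          then have s': "a < s" "s < \<sigma>' 1" using s N1 by (auto simp: \<sigma>_def)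
          consider "s < z" | "s = z" | "z < s" by fastforce
          then show ?thesis
          proof cases
            case 1 then show ?thesis using e0 s' True \<open>i = 1\<close> by simp
          next
            case 2 then show ?thesis using az by simp
          next
            case 3 then show ?thesis using IH(2,5) s' \<open>i = 1\<close> N1 by force
          qed
        next
          case 2
          then have "\<sigma> (i-1) = \<sigma>' (i-1)" "\<sigma> i = \<sigma>' i" by (auto simp: \<sigma>_def)
          then show ?thesis using IH(5) 2 s by auto
        next
          case 3
          then have "\<sigma> (i-1) = b" "\<sigma> i = b" using IH(3) by (auto simp: \<sigma>_def)
          then show ?thesis using s by simp
        qed
      qed
      have m: "\<forall>i<Suc N. \<sigma> i \<le> \<sigma> (Suc i)"
      proof (intro allI impI)
        fix i assume i: "i < Suc N"
        have z1: "z \<le> \<sigma>' 1" using IH(2,4) N1 by force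
        consider "i = 0" | "1 \<le> i" "i < N" | "i = N" using i by linarith
        then show "\<sigma> i \<le> \<sigma> (Suc i)"
        proof cases
          case 1 then show ?thesis using az z1 N1 by (simp add: \<sigma>_def)
        next
          case 2 then show ?thesis using IH(4) by (simp add: \<sigma>_def)
        next
          case 3 then show ?thesis using IH(3) N1 by (simp add: \<sigma>_def)
        qed
      qed
      show ?thesis using IH(1,3) p m N1 by (intro exI[of _ \<sigma>] exI[of _ \<epsilon>']) (simp add: \<sigma>_def)
    next
      case False
      then have e0': "e0 = - \<epsilon>'" using e0(1) IH(1) by auto
      define \<sigma> where "\<sigma> i = (if i = 0 then a else \<sigma>' (i - 1))" for i
      have p: "\<forall>i\<in>{1..Suc N}. \<forall>s. \<sigma> (i-1) < s \<and> s < \<sigma> i \<longrightarrow> 0 \<le> e0 * (-1)^(i-1) * g s"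
      proof (intro ballI allI impI)
        fix i s assume i: "i \<in> {1..Suc N}" and s: "\<sigma> (i-1) < s \<and> s < \<sigma> i"
        show "0 \<le> e0 * (-1)^(i-1) * g s"
        proof (cases "i = 1")
          case True
          then show ?thesis using s e0 IH(2) by (simp add: \<sigma>_def)
        next
          case False
          have "2 \<le> i" using i False by auto
          then obtain j where "i = 2 + j" using le_Suc_ex by blast
          then have j: "i = Suc (Suc j)" by simp
          have "Suc j \<in> {1..N}" using i j by auto
          moreover have "\<sigma>' (Suc j - 1) < s \<and> s < \<sigma>' (Suc j)" using s j by (simp add: \<sigma>_def)
          ultimately have "0 \<le> \<epsilon>' * (-1)^(Suc j - 1) * g s" using IH(5) by blast
          then show ?thesis using j e0' by simp
        qed
      qed
      have m: "\<forall>i<Suc N. \<sigma> i \<le> \<sigma> (Suc i)"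
      proof (intro allI impI)
        fix i assume i: "i < Suc N"
        show "\<sigma> i \<le> \<sigma> (Suc i)"
        proof (cases i)
          case 0 then show ?thesis using IH(2) az by (simp add: \<sigma>_def)
        next
          case (Suc k) then show ?thesis using IH(4) i by (simp add: \<sigma>_def)
        qed
      qed
      show ?thesis using e0(1) IH(3) p m by (intro exI[of _ \<sigma>] exI[of _ e0]) (simp add: \<sigma>_def)
    qed
  qed
qed

lemma pw_has_integral:
  fixes f :: "real \<Rightarrow> 'a::banach"
  assumes "\<forall>i<N. \<sigma> i \<le> \<sigma> (Suc i)" "\<forall>i\<in>{1..N}. (f has_integral I i) {\<sigma> (i-1)..\<sigma> i}"
  shows "(f has_integral (\<Sum>i\<in>{1..N}. I i)) {\<sigma> 0..\<sigma> N} \<and> \<sigma> 0 \<le> \<sigma> N"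
  using assms
proof (induction N)
  case 0
  then show ?case using has_integral_refl(1)[of f "\<sigma> 0"] by simp
next
  case (Suc N)
  then have IH: "(f has_integral (\<Sum>i\<in>{1..N}. I i)) {\<sigma> 0..\<sigma> N}" "\<sigma> 0 \<le> \<sigma> N" by auto
  have "Suc N \<in> {1..Suc N}" by simp
  then have "(f has_integral I (Suc N)) {\<sigma> (Suc N - 1)..\<sigma> (Suc N)}" using Suc.prems(2) by blast
  then have "(f has_integral I (Suc N)) {\<sigma> N..\<sigma> (Suc N)}" by simp
  moreover have "\<sigma> N \<le> \<sigma> (Suc N)" using Suc.prems(1) by simp
  ultimately have "(f has_integral ((\<Sum>i\<in>{1..N}. I i) + I (Suc N))) {\<sigma> 0..\<sigma> (Suc N)}"
    using has_integral_combine[OF IH(2) _ IH(1)] by blast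
  then show ?case using IH(2) \<open>\<sigma> N \<le> \<sigma> (Suc N)\<close> by simp
qed

lemma xi_poly_zeros:
  fixes y :: "'n::{finite,wellorder} rvec"
  assumes "y \<noteq> 0"
  shows "finite {s. 0 < s \<and> s < t \<and> y \<bullet> xi (t - s) = 0} \<and> card {s. 0 < s \<and> s < t \<and> y \<bullet> xi (t - s) = 0} < CARD('n)"
proof -
  define m where "m k = CARD('n) - 1 - pos k" for k :: 'n
  define p where "p = (\<Sum>k\<in>UNIV. monom (y $ k / fact (m k)) (m k))"
  have pe: "poly p r = y \<bullet> (xi r :: 'n rvec)" for r
    unfolding p_def poly_sum poly_monom inner_vec_def xi_def m_def by (simp add: field_simps)
  have minj: "m k = m k' \<longleftrightarrow> k = k'" for k k'
  proof
    assume "m k = m k'"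
    then have "pos k = pos k'" unfolding m_def using pos_less_card[of k] pos_less_card[of k'] by arith
    then show "k = k'" by simp
  qed simp
  obtain k where k: "y $ k \<noteq> 0" using assms by (metis vec_eq_iff zero_index)
  have "coeff p (m k) = (\<Sum>k'\<in>UNIV. if k' = k then y $ k' / fact (m k') else 0)"
    unfolding p_def coeff_sum coeff_monom by (intro sum.cong refl) (simp add: minj)
  also have "\<dots> = y $ k / fact (m k)" by simp
  finally have "coeff p (m k) \<noteq> 0" using k by simp
  then have p0: "p \<noteq> 0" by auto
  have "degree p \<le> CARD('n) - 1"
  proof (rule degree_le, intro allI impI)
    fix i assume "CARD('n) - 1 < i"
    then have "m k' \<noteq> i" for k' unfolding m_def by arith
    then show "coeff p i = 0" unfolding p_def coeff_sum coeff_monom by simp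
  qed
  have sub: "{s. 0 < s \<and> s < t \<and> y \<bullet> xi (t - s) = 0} \<subseteq> (\<lambda>r. t - r) ` {r. poly p r = 0}"
  proof
    fix s assume "s \<in> {s. 0 < s \<and> s < t \<and> y \<bullet> xi (t - s) = 0}"
    then have "poly p (t - s) = 0" "s = t - (t - s)" using pe by auto
    then show "s \<in> (\<lambda>r. t - r) ` {r. poly p r = 0}" by blast
  qed
  have fin: "finite {r. poly p r = 0}" using poly_roots_finite[OF p0] .
  have "card {s. 0 < s \<and> s < t \<and> y \<bullet> xi (t - s) = 0} \<le> card ((\<lambda>r. t - r) ` {r. poly p r = 0})"
    using sub fin by (intro card_mono) auto
  also have "\<dots> \<le> card {r. poly p r = 0}" by (rule card_image_le[OF fin])
  also have "\<dots> \<le> degree p" by (rule card_poly_roots_bound[OF p0])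
  also have "\<dots> < CARD('n)"
  proof -
    have "0 < CARD('n)" by simp
    then show ?thesis using \<open>degree p \<le> CARD('n) - 1\<close> by linarith
  qed
  finally show ?thesis using finite_subset[OF sub finite_imageI[OF fin]] by blast
qed

lemma chain_le:
  fixes \<sigma> :: "nat \<Rightarrow> real"
  assumes "\<forall>i<N. \<sigma> i \<le> \<sigma> (Suc i)" "j \<le> k" "k \<le> N"
  shows "\<sigma> j \<le> \<sigma> k"
  using assms(2,3)
proof (induction k)
  case 0 then show ?case by simp
next
  case (Suc k)
  show ?case
  proof (cases "j = Suc k")
    case True then show ?thesis by simp
  next
    case False
    then have "\<sigma> j \<le> \<sigma> k" using Suc by simp
    also have "\<sigma> k \<le> \<sigma> (Suc k)" using assms(1) Suc.prems by simp
    finally show ?thesis .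
  qed
qed

lemma sgn_pw_has_integral:
  fixes H :: "real \<Rightarrow> real \<Rightarrow> 'a::banach"
  assumes mono: "\<forall>i<N. \<sigma> i \<le> \<sigma> (Suc i)" and fK: "finite K"
    and wpc: "\<forall>i\<in>{1..N}. \<forall>s. \<sigma> (i-1) < s \<and> s < \<sigma> i \<and> s \<notin> K \<longrightarrow> w s = e i"
    and cH: "\<forall>v. continuous_on {\<sigma> 0..\<sigma> N} (\<lambda>s. H s v)"
  shows "((\<lambda>s. H s (w s)) has_integral (\<Sum>i\<in>{1..N}. integral {\<sigma> (i-1)..\<sigma> i} (\<lambda>s. H s (e i)))) {\<sigma> 0..\<sigma> N}"
proof -
  have "\<forall>i\<in>{1..N}. ((\<lambda>s. H s (w s)) has_integral integral {\<sigma> (i-1)..\<sigma> i} (\<lambda>s. H s (e i))) {\<sigma> (i-1)..\<sigma> i}"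
  proof
    fix i assume i: "i \<in> {1..N}"
    have "\<sigma> 0 \<le> \<sigma> (i-1)" "\<sigma> i \<le> \<sigma> N" using i by (auto intro!: chain_le[OF mono])
    then have sub: "{\<sigma> (i-1)..\<sigma> i} \<subseteq> {\<sigma> 0..\<sigma> N}" by auto
    have "(\<lambda>s. H s (e i)) integrable_on {\<sigma> (i-1)..\<sigma> i}"
      by (rule integrable_continuous_real) (rule continuous_on_subset[OF cH[rule_format] sub])
    then have "((\<lambda>s. H s (e i)) has_integral integral {\<sigma> (i-1)..\<sigma> i} (\<lambda>s. H s (e i))) {\<sigma> (i-1)..\<sigma> i}"
      by (rule integrable_integral)
    note hint = this
    have eq: "H s (w s) = H s (e i)" if "s \<in> {\<sigma> (i-1)..\<sigma> i} - (K \<union> {\<sigma> (i-1), \<sigma> i})" for s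
    proof -
      have "\<sigma> (i-1) < s \<and> s < \<sigma> i \<and> s \<notin> K" using that by auto
      then show ?thesis using wpc i by auto
    qed
    show "((\<lambda>s. H s (w s)) has_integral integral {\<sigma> (i-1)..\<sigma> i} (\<lambda>s. H s (e i))) {\<sigma> (i-1)..\<sigma> i}"
      by (rule has_integral_spike_finite[OF _ _ hint, where S="K \<union> {\<sigma> (i-1), \<sigma> i}"]) (use fK eq in auto)
  qed
  then show ?thesis using pw_has_integral[OF mono, where I="\<lambda>i. integral {\<sigma> (i-1)..\<sigma> i} (\<lambda>s. H s (e i))" and f="\<lambda>s. H s (w s)"] by blast
qed

lemma clamp_bound:
  fixes k r :: real
  assumes "k > 0"
  shows "\<bar>r\<bar> - r * max (-1) (min 1 (k * r)) \<le> 1 / k" "-1 \<le> max (-1) (min 1 (k * r))" "max (-1) (min 1 (k * r)) \<le> 1"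
proof -
  show "-1 \<le> max (-1) (min 1 (k * r))" "max (-1) (min 1 (k * r)) \<le> 1" by auto
  consider "k * r \<ge> 1" | "k * r \<le> -1" | "-1 < k * r" "k * r < 1" by linarith
  then show "\<bar>r\<bar> - r * max (-1) (min 1 (k * r)) \<le> 1 / k"
  proof cases
    case 1
    have "r > 0"
    proof (rule ccontr)
      assume "\<not> r > 0"
      then have "k * r \<le> 0" using assms by (simp add: mult_nonneg_nonpos)
      then show False using 1 by linarith
    qed
    then show ?thesis using 1 assms by simp
  next
    case 2
    have "r < 0"
    proof (rule ccontr)
      assume "\<not> r < 0"
      then have "k * r \<ge> 0" using assms by simp
      then show False using 2 by linarith
    qed
    then show ?thesis using 2 assms by simp
  next
    case 3
    then have m: "max (-1) (min 1 (k * r)) = k * r" by simp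
    have "k * \<bar>r\<bar> < 1" using 3 assms by (simp add: abs_less_iff abs_mult)
    then have "\<bar>r\<bar> < 1 / k" using assms by (simp add: field_simps)
    moreover have "0 \<le> r * (k * r)"
    proof -
      have "0 \<le> k * (r * r)" using assms by simp
      also have "k * (r * r) = r * (k * r)" by (simp add: ac_simps)
      finally show ?thesis .
    qed
    ultimately show ?thesis unfolding m by linarith
  qed
qed

lemma le_of_eps:
  fixes A B C :: real
  assumes "\<forall>k::nat. k \<ge> 1 \<longrightarrow> A \<le> B + C / real k"
  shows "A \<le> B"
proof (rule ccontr)
  assume "\<not> A \<le> B"
  then have d: "A - B > 0" by simp
  obtain n :: nat where n: "C / (A - B) < real n" using reals_Archimedean2 by blast
  define k where "k = Suc n"
  have k: "k \<ge> 1" "real k > C / (A - B)" using n unfolding k_def by auto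
  then have "C / real k < A - B" using d by (simp add: field_simps)
  then show False using assms k(1) by force
qed

lemma inner_integral:
  fixes f :: "real \<Rightarrow> 'a::euclidean_space"
  assumes "f integrable_on S"
  shows "y \<bullet> integral S f = integral S (\<lambda>s. y \<bullet> f s)"
  using integral_linear[OF assms bounded_linear_inner_right[of y]] by (simp add: o_def)

lemma cont_bounded:
  fixes f :: "real \<Rightarrow> 'a::real_normed_vector"
  assumes "continuous_on {a..b} f"
  obtains M where "M \<ge> 0" "\<forall>s\<in>{a..b}. norm (f s) \<le> M"
proof -
  have "compact (f ` {a..b})" by (intro compact_continuous_image assms) auto
  then have "bounded (f ` {a..b})" by (rule compact_imp_bounded)
  then obtain M where "\<forall>x\<in>f ` {a..b}. norm x \<le> M" by (auto simp: bounded_iff)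
  then show ?thesis using that[of "max M 0"] by force
qed

lemma neg_one_pow_cases: "(-1::real) ^ m = 1 \<or> (-1::real) ^ m = -1"
  by (cases "even m") simp_all

lemma main_general:
  fixes x0 :: "'n::{finite,wellorder} rvec" and lo hi :: "real \<Rightarrow> real"
  assumes t: "t > 0" and clo: "continuous_on {0..t} lo" and chi: "continuous_on {0..t} hi"
    and le: "\<forall>s\<in>{0..t}. lo s \<le> hi s"
    and xb: "xbdy \<in> frontier (int_reach t x0 lo hi)"
  shows "\<exists>\<sigma>::nat \<Rightarrow> real. \<exists>\<epsilon>::real. \<epsilon> \<in> {1, -1} \<and> \<sigma> 0 = 0 \<and> \<sigma> CARD('n) = t \<and> (\<forall>i<CARD('n). \<sigma> i \<le> \<sigma> (Suc i)) \<and>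
    xbdy = chi_vec t x0 + integral {0..t} (\<lambda>s. ((hi s + lo s) / 2) *\<^sub>R xi (t - s))
      + \<epsilon> *\<^sub>R (\<Sum>i\<in>{1..CARD('n)}. (-1) ^ (i - 1) *\<^sub>R integral {\<sigma> (i - 1)..\<sigma> i} (\<lambda>s. ((hi s - lo s) / 2) *\<^sub>R xi (t - s)))"
proof -
  define S where "S = int_reach t x0 lo hi"
  define N where "N = CARD('n)"
  define \<nu> where "\<nu> s = (hi s + lo s) / 2" for s
  define \<mu> where "\<mu> s = (hi s - lo s) / 2" for s
  define \<Xi> where "\<Xi> s = (xi (t - s) :: 'n rvec)" for s
  define z where "z u = chi_vec t x0 + integral {0..t} (\<lambda>s. u s *\<^sub>R \<Xi> s)" for u
  have c\<Xi>: "continuous_on {0..t} \<Xi>"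
    unfolding \<Xi>_def xi_def by (auto intro!: continuous_intros simp: continuous_on_vec_lambda)
  have c\<nu>: "continuous_on {0..t} \<nu>" unfolding \<nu>_def using clo chi by (auto intro!: continuous_intros)
  have c\<mu>: "continuous_on {0..t} \<mu>" unfolding \<mu>_def using clo chi by (auto intro!: continuous_intros)
  have \<mu>0: "\<forall>s\<in>{0..t}. 0 \<le> \<mu> s" using le unfolding \<mu>_def by auto
  obtain M\<mu> where M\<mu>: "M\<mu> \<ge> 0" "\<forall>s\<in>{0..t}. norm (\<mu> s) \<le> M\<mu>" using cont_bounded[OF c\<mu>] by blast
  obtain M\<Xi> where M\<Xi>: "M\<Xi> \<ge> 0" "\<forall>s\<in>{0..t}. norm (\<Xi> s) \<le> M\<Xi>" using cont_bounded[OF c\<Xi>] by blast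
  have int_u: "(\<lambda>s. u s *\<^sub>R \<Xi> s) integrable_on {0..t}" if "continuous_on {0..t} u" for u
    using that c\<Xi> by (intro integrable_continuous_real continuous_intros)
  have repr: "\<exists>u. continuous_on {0..t} u \<and> (\<forall>s\<in>{0..t}. lo s \<le> u s \<and> u s \<le> hi s) \<and> p = z u" if hp: "p \<in> S" for p
  proof -
    obtain x u where xu: "p = x t" "continuous_on {0..t} u" "\<forall>s\<in>{0..t}. lo s \<le> u s \<and> u s \<le> hi s" "x 0 = x0"
      "\<forall>s\<in>{0..t}. (x has_vector_derivative (Aint *v x s + u s *\<^sub>R bcon)) (at s within {0..t})"
      using hp unfolding S_def int_reach_def by blast
    have "((\<lambda>s. u s *\<^sub>R xi (t - s)) has_integral (x t - chi_vec t (x 0))) {0..t}"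
      using reach_repr[of t u x] t xu by auto
    then have "p = z u" unfolding z_def \<Xi>_def using xu(1,4) by (simp add: integral_unique)
    then show ?thesis using xu by blast
  qed
  have mem: "z u \<in> S" if u: "continuous_on {0..t} u" "\<forall>s\<in>{0..t}. lo s \<le> u s \<and> u s \<le> hi s" for u
  proof -
    obtain x :: "real \<Rightarrow> 'n rvec" where x: "x 0 = x0"
      "\<forall>s\<in>{0..t}. (x has_vector_derivative (Aint *v x s + u s *\<^sub>R bcon)) (at s within {0..t})"
      using reach_exists[OF u(1)] by blast
    have "((\<lambda>s. u s *\<^sub>R xi (t - s)) has_integral (x t - chi_vec t (x 0))) {0..t}"
      using reach_repr[of t u x] t x u by auto
    then have "z u = x t" unfolding z_def \<Xi>_def using x(1) by (simp add: integral_unique)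
    moreover have "x t \<in> S" unfolding S_def int_reach_def using x u by blast
    ultimately show ?thesis by simp
  qed
  have cS: "convex S" unfolding S_def using le by (rule int_reach_convex)
  obtain y where y: "y \<noteq> 0" "\<forall>p\<in>S. y \<bullet> p \<le> y \<bullet> xbdy"
    using frontier_support[OF cS] xb unfolding S_def by blast
  define g where "g s = y \<bullet> \<Xi> s" for s
  have cg: "continuous_on {0..t} g" unfolding g_def using c\<Xi> by (intro continuous_intros)
  have zer: "finite {s. 0 < s \<and> s < t \<and> g s = 0}" "card {s. 0 < s \<and> s < t \<and> g s = 0} < N"
    using xi_poly_zeros[OF y(1), of t] unfolding g_def \<Xi>_def N_def by auto
  obtain \<sigma> \<epsilon> where \<sigma>: "\<epsilon> \<in> {1,-1::real}" "\<sigma> 0 = 0" "\<sigma> N = t" "\<forall>i<N. \<sigma> i \<le> \<sigma> (Suc i)"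
     "\<forall>i\<in>{1..N}. \<forall>s. \<sigma> (i-1) < s \<and> s < \<sigma> i \<longrightarrow> 0 \<le> \<epsilon> * (-1)^(i-1) * g s"
    using sign_pieces[OF cg _ zer] t by fastforce
  define e where "e i = \<epsilon> * (-1)^(i-1)" for i :: nat
  define Zc where "Zc = {s. 0 < s \<and> s < t \<and> g s = 0} \<union> {0, t}"
  have fZc: "finite Zc" unfolding Zc_def using zer(1) by simp
  have wpc: "\<forall>i\<in>{1..N}. \<forall>s. \<sigma> (i-1) < s \<and> s < \<sigma> i \<and> s \<notin> Zc \<longrightarrow> sgn (g s) = e i"
  proof (intro ballI allI impI)
    fix i s assume i: "i \<in> {1..N}" and s: "\<sigma> (i-1) < s \<and> s < \<sigma> i \<and> s \<notin> Zc"
    have "\<sigma> 0 \<le> \<sigma> (i-1)" "\<sigma> i \<le> \<sigma> N" using i by (auto intro!: chain_le[OF \<sigma>(4)])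
    then have "0 < s" "s < t" using s \<sigma>(2,3) by auto
    then have gs: "g s \<noteq> 0" using s unfolding Zc_def by auto
    have eg: "0 \<le> e i * g s" using \<sigma>(5) i s unfolding e_def by blast
    have "e i = 1 \<or> e i = -1" unfolding e_def using \<sigma>(1) neg_one_pow_cases[of "i-1"] by auto
    then show "sgn (g s) = e i" using gs eg by (auto simp: sgn_if)
  qed
  have pw_r: "(\<lambda>s. H s (sgn (g s))) integrable_on {0..t}" if "\<forall>v. continuous_on {0..t} (\<lambda>s. H s v)"
    for H :: "real \<Rightarrow> real \<Rightarrow> real"
    using sgn_pw_has_integral[OF \<sigma>(4) fZc wpc, of H] that \<sigma>(2,3) by auto
  have pw_v: "(\<lambda>s. H s (sgn (g s))) integrable_on {0..t}" if "\<forall>v. continuous_on {0..t} (\<lambda>s. H s v)"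
    for H :: "real \<Rightarrow> real \<Rightarrow> 'n rvec"
    using sgn_pw_has_integral[OF \<sigma>(4) fZc wpc, of H] that \<sigma>(2,3) by auto
  define xs where "xs = chi_vec t x0 + integral {0..t} (\<lambda>s. (\<nu> s + \<mu> s * sgn (g s)) *\<^sub>R \<Xi> s)"
  define dd where "dd u s = \<nu> s + \<mu> s * sgn (g s) - u s" for u s
  have int_xs: "(\<lambda>s. (\<nu> s + \<mu> s * sgn (g s)) *\<^sub>R \<Xi> s) integrable_on {0..t}"
    by (rule pw_v[of "\<lambda>s v. (\<nu> s + \<mu> s * v) *\<^sub>R \<Xi> s"]) (use c\<nu> c\<mu> c\<Xi> in \<open>auto intro!: continuous_intros\<close>)
  have int_ddv: "(\<lambda>s. dd u s *\<^sub>R \<Xi> s) integrable_on {0..t}" if "continuous_on {0..t} u" for u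
    unfolding dd_def
    by (rule pw_v[of "\<lambda>s v. (\<nu> s + \<mu> s * v - u s) *\<^sub>R \<Xi> s"]) (use c\<nu> c\<mu> c\<Xi> that in \<open>auto intro!: continuous_intros\<close>)
  have int_gdd: "(\<lambda>s. g s * dd u s) integrable_on {0..t}" if "continuous_on {0..t} u" for u
    unfolding dd_def
    by (rule pw_r[of "\<lambda>s v. g s * (\<nu> s + \<mu> s * v - u s)"]) (use c\<nu> c\<mu> cg that in \<open>auto intro!: continuous_intros\<close>)
  have int_add: "(\<lambda>s. \<bar>dd u s\<bar>) integrable_on {0..t}" if "continuous_on {0..t} u" for u
    unfolding dd_def
    by (rule pw_r[of "\<lambda>s v. \<bar>\<nu> s + \<mu> s * v - u s\<bar>"]) (use c\<nu> c\<mu> that in \<open>auto intro!: continuous_intros\<close>)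
  have K1: "xs - z u = integral {0..t} (\<lambda>s. dd u s *\<^sub>R \<Xi> s)" if u: "continuous_on {0..t} u" for u
  proof -
    have "integral {0..t} (\<lambda>s. dd u s *\<^sub>R \<Xi> s) = integral {0..t} (\<lambda>s. (\<nu> s + \<mu> s * sgn (g s)) *\<^sub>R \<Xi> s - u s *\<^sub>R \<Xi> s)"
      unfolding dd_def by (simp add: scaleR_diff_left)
    also have "\<dots> = integral {0..t} (\<lambda>s. (\<nu> s + \<mu> s * sgn (g s)) *\<^sub>R \<Xi> s) - integral {0..t} (\<lambda>s. u s *\<^sub>R \<Xi> s)"
      by (rule integral_diff[OF int_xs int_u[OF u]])
    finally show ?thesis unfolding xs_def z_def by simp
  qed
  have K2: "y \<bullet> xs - y \<bullet> z u = integral {0..t} (\<lambda>s. g s * dd u s)" if u: "continuous_on {0..t} u" for u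
  proof -
    have "y \<bullet> xs - y \<bullet> z u = y \<bullet> (xs - z u)" by (simp add: inner_diff_right)
    also have "\<dots> = integral {0..t} (\<lambda>s. y \<bullet> (dd u s *\<^sub>R \<Xi> s))"
      unfolding K1[OF u] by (rule inner_integral[OF int_ddv[OF u]])
    also have "\<dots> = integral {0..t} (\<lambda>s. g s * dd u s)" unfolding g_def by (simp add: mult.commute)
    finally show ?thesis .
  qed
  have P: "g s * dd u s = \<bar>g s\<bar> * \<bar>dd u s\<bar> \<and> \<bar>dd u s\<bar> \<le> 2 * M\<mu>"
    if s: "s \<in> {0..t}" and adm: "lo s \<le> u s \<and> u s \<le> hi s" for u s
  proof -
    have m: "\<mu> s \<le> M\<mu>" using M\<mu>(2) s by (metis abs_ge_self order_trans real_norm_def)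
    have "\<nu> s + \<mu> s = hi s" "\<nu> s - \<mu> s = lo s" unfolding \<nu>_def \<mu>_def by (simp_all add: field_simps)
    then show ?thesis using adm m \<mu>0 s unfolding dd_def
      by (cases "g s > 0"; cases "g s < 0") (auto simp: sgn_if abs_mult abs_if mult_le_0_iff zero_le_mult_iff algebra_simps)
  qed
  have sup: "y \<bullet> xs \<le> y \<bullet> xbdy"
  proof (rule le_of_eps[where C="t * M\<mu>"], intro allI impI)
    fix k :: nat assume k: "k \<ge> 1"
    define uk where "uk s = \<nu> s + \<mu> s * max (-1) (min 1 (real k * g s))" for s
    have cuk: "continuous_on {0..t} uk" unfolding uk_def using c\<nu> c\<mu> cg by (intro continuous_intros)
    have admk: "\<forall>s\<in>{0..t}. lo s \<le> uk s \<and> uk s \<le> hi s"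
    proof
      fix s assume s: "s \<in> {0..t}"
      have kk: "(0::real) < real k" using k by simp
      have b: "-1 \<le> max (-1) (min 1 (real k * g s))" "max (-1) (min 1 (real k * g s)) \<le> 1"
        using clamp_bound[OF kk] by auto
      have m0: "0 \<le> \<mu> s" using \<mu>0 s by auto
      have "\<mu> s * max (-1) (min 1 (real k * g s)) \<le> \<mu> s * 1" by (rule mult_left_mono[OF b(2) m0])
      moreover have "\<mu> s * (-1) \<le> \<mu> s * max (-1) (min 1 (real k * g s))" by (rule mult_left_mono[OF b(1) m0])
      moreover have "\<nu> s + \<mu> s = hi s" "\<nu> s - \<mu> s = lo s" unfolding \<nu>_def \<mu>_def by (simp_all add: field_simps)
      ultimately show "lo s \<le> uk s \<and> uk s \<le> hi s" unfolding uk_def by simp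
    qed
    have "y \<bullet> z uk \<le> y \<bullet> xbdy" using y(2) mem[OF cuk admk] by blast
    moreover have "y \<bullet> xs - y \<bullet> z uk \<le> t * M\<mu> / real k"
    proof -
      have "integral {0..t} (\<lambda>s. g s * dd uk s) \<le> integral {0..t} (\<lambda>s. M\<mu> / real k)"
      proof (rule integral_le[OF int_gdd[OF cuk]])
        show "(\<lambda>s. M\<mu> / real k) integrable_on {0..t}" by (rule integrable_continuous_real) (rule continuous_on_const)
        fix s assume s: "s \<in> {0..t}"
        have kk: "(0::real) < real k" using k by simp
        have "g s * dd uk s = \<mu> s * (\<bar>g s\<bar> - g s * max (-1) (min 1 (real k * g s)))"
          unfolding dd_def uk_def by (simp add: algebra_simps sgn_if abs_if)
        also have "\<dots> \<le> \<mu> s * (1 / real k)"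
          using clamp_bound(1)[OF kk, of "g s"] \<mu>0 s by (intro mult_left_mono) auto
        also have "\<dots> \<le> M\<mu> / real k"
        proof -
          have "\<mu> s \<le> M\<mu>" using M\<mu>(2) s by (metis abs_ge_self order_trans real_norm_def)
          then show ?thesis using kk by (simp add: divide_right_mono)
        qed
        finally show "g s * dd uk s \<le> M\<mu> / real k" .
      qed
      also have "\<dots> = t * M\<mu> / real k" using t by simp
      finally show ?thesis using K2[OF cuk] by simp
    qed
    ultimately show "y \<bullet> xs \<le> y \<bullet> xbdy + t * M\<mu> / real k" by linarith
  qed
  have "xbdy \<in> closure S" using xb unfolding S_def frontier_def by auto
  then obtain X where X: "\<forall>k. X k \<in> S" "X \<longlonglongrightarrow> xbdy" unfolding closure_sequential by blast
  have "\<forall>k. \<exists>u. continuous_on {0..t} u \<and> (\<forall>s\<in>{0..t}. lo s \<le> u s \<and> u s \<le> hi s) \<and> X k = z u"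
    using repr X(1) by blast
  then obtain U where U: "\<forall>k. continuous_on {0..t} (U k) \<and> (\<forall>s\<in>{0..t}. lo s \<le> U k s \<and> U k s \<le> hi s) \<and> X k = z (U k)"
    by metis
  define D where "D k = integral {0..t} (\<lambda>s. g s * dd (U k) s)" for k
  define A where "A k = integral {0..t} (\<lambda>s. \<bar>dd (U k) s\<bar>)" for k
  have D0: "0 \<le> D k" for k unfolding D_def
    using U P by (intro integral_nonneg int_gdd) auto
  have A0: "0 \<le> A k" for k unfolding A_def using U by (intro integral_nonneg int_add) auto
  have DX: "D k = y \<bullet> xs - y \<bullet> X k" for k unfolding D_def using K2 U by metis
  have Dlim: "D \<longlonglongrightarrow> 0"
  proof (rule Lim_null_comparison)
    show "\<forall>\<^sub>F k in sequentially. norm (D k) \<le> y \<bullet> xbdy - y \<bullet> X k"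
      using D0 DX sup by (auto intro!: always_eventually)
    have "(\<lambda>k. y \<bullet> X k) \<longlonglongrightarrow> y \<bullet> xbdy" by (intro tendsto_intros X(2))
    then show "(\<lambda>k. y \<bullet> xbdy - y \<bullet> X k) \<longlonglongrightarrow> 0"
      using tendsto_diff[OF tendsto_const[of "y \<bullet> xbdy"]] by fastforce
  qed
  define h where "h j s = max 0 (1 - \<bar>g s\<bar> * real (Suc j))" for j s
  have ch: "continuous_on {0..t} (h j)" for j unfolding h_def using cg by (intro continuous_intros)
  have Abound: "A k \<le> D k * real (Suc j) + 2 * M\<mu> * integral {0..t} (h j)" for k j
  proof -
    have uk: "continuous_on {0..t} (U k)" using U by blast
    have "A k \<le> integral {0..t} (\<lambda>s. g s * dd (U k) s * real (Suc j) + 2 * M\<mu> * h j s)"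
      unfolding A_def
    proof (rule integral_le[OF int_add[OF uk]])
      show "(\<lambda>s. g s * dd (U k) s * real (Suc j) + 2 * M\<mu> * h j s) integrable_on {0..t}"
        by (intro integrable_add integrable_on_mult_left integrable_on_mult_right int_gdd uk
            integrable_continuous_real ch)
      fix s assume s: "s \<in> {0..t}"
      have Ps: "g s * dd (U k) s = \<bar>g s\<bar> * \<bar>dd (U k) s\<bar>" "\<bar>dd (U k) s\<bar> \<le> 2 * M\<mu>" using P[OF s] U s by auto
      show "\<bar>dd (U k) s\<bar> \<le> g s * dd (U k) s * real (Suc j) + 2 * M\<mu> * h j s"
      proof (cases "\<bar>g s\<bar> * real (Suc j) \<ge> 1")
        case True
        have "\<bar>dd (U k) s\<bar> \<le> \<bar>dd (U k) s\<bar> * (\<bar>g s\<bar> * real (Suc j))"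
          using True by (simp add: mult_le_cancel_left1)
        moreover have "0 \<le> 2 * M\<mu> * h j s" using M\<mu>(1) unfolding h_def by simp
        ultimately show ?thesis using Ps(1) by (simp add: algebra_simps)
      next
        case False
        then have hj: "h j s = 1 - \<bar>g s\<bar> * real (Suc j)" unfolding h_def by simp
        have "\<bar>dd (U k) s\<bar> * (1 - \<bar>g s\<bar> * real (Suc j)) \<le> 2 * M\<mu> * (1 - \<bar>g s\<bar> * real (Suc j))"
          using False Ps(2) by (intro mult_right_mono) auto
        moreover have "\<bar>dd (U k) s\<bar> * (1 - \<bar>g s\<bar> * real (Suc j)) = \<bar>dd (U k) s\<bar> - \<bar>dd (U k) s\<bar> * (\<bar>g s\<bar> * real (Suc j))"
          by (simp add: algebra_simps)
        moreover have "g s * dd (U k) s * real (Suc j) = \<bar>dd (U k) s\<bar> * (\<bar>g s\<bar> * real (Suc j))"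
          using Ps(1) by simp
        ultimately show ?thesis unfolding hj by linarith
      qed
    qed
    also have "\<dots> = D k * real (Suc j) + 2 * M\<mu> * integral {0..t} (h j)"
    proof -
      have i1: "(\<lambda>s. g s * dd (U k) s * real (Suc j)) integrable_on {0..t}"
        by (intro integrable_on_mult_left int_gdd uk)
      have i2: "(\<lambda>s. 2 * M\<mu> * h j s) integrable_on {0..t}"
        by (intro integrable_on_mult_right integrable_continuous_real ch)
      show ?thesis unfolding D_def integral_add[OF i1 i2]
        using integral_mult[OF int_gdd[OF uk], of "real (Suc j)"] integral_mult[OF integrable_continuous_real[OF ch[of j]], of "2 * M\<mu>"]
        by (simp add: mult.commute)
    qed
    finally show ?thesis .
  qed
  have Hlim: "(\<lambda>j. integral {0..t} (h j)) \<longlonglongrightarrow> 0"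
  proof -
    define L where "L s = (if g s = 0 then 1 else 0::real)" for s
    have conv: "(\<lambda>j. h j s) \<longlonglongrightarrow> L s" for s
    proof (cases "g s = 0")
      case True then show ?thesis unfolding h_def L_def by simp
    next
      case False
      then have "\<bar>g s\<bar> > 0" by simp
      then obtain n where n: "n > 0" "inverse (real n) < \<bar>g s\<bar>" using ex_inverse_of_nat_less by blast
      have "\<forall>\<^sub>F j in sequentially. h j s = L s"
      proof (rule eventually_sequentiallyI[of n])
        fix j assume j: "n \<le> j"
        have "1 < \<bar>g s\<bar> * real n" using n by (simp add: field_simps)
        also have "\<dots> \<le> \<bar>g s\<bar> * real (Suc j)" using j by (intro mult_left_mono) auto
        finally show "h j s = L s" unfolding h_def L_def using False by simp
      qed
      then show ?thesis by (rule tendsto_eventually)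
    qed
    have "(\<lambda>j. integral {0..t} (h j)) \<longlonglongrightarrow> integral {0..t} L"
    proof (rule dominated_convergence(2)[where h="\<lambda>s. 1" and f=h and g=L])
      show "\<And>k. h k integrable_on {0..t}" using ch integrable_continuous_real by blast
      show "(\<lambda>s. 1::real) integrable_on {0..t}" by (rule integrable_continuous_real) (rule continuous_on_const)
      show "\<And>k s. s \<in> {0..t} \<Longrightarrow> norm (h k s) \<le> 1" by (auto simp: h_def)
      show "\<And>s. s \<in> {0..t} \<Longrightarrow> (\<lambda>k. h k s) \<longlonglongrightarrow> L s" using conv by blast
    qed
    moreover have "(L has_integral 0) {0..t}"
    proof (rule has_integral_spike_finite[OF fZc _ has_integral_0])
      fix s assume "s \<in> {0..t} - Zc"
      then show "L s = 0" unfolding L_def Zc_def by auto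
    qed
    ultimately show ?thesis by (simp add: integral_unique)
  qed
  have Alim: "A \<longlonglongrightarrow> 0"
  proof (rule tendstoI)
    fix \<eta> :: real assume \<eta>: "\<eta> > 0"
    have T: "(\<lambda>j. 2 * M\<mu> * integral {0..t} (h j)) \<longlonglongrightarrow> 0"
      using tendsto_mult[OF tendsto_const Hlim, of "2 * M\<mu>"] by simp
    have "\<forall>\<^sub>F j in sequentially. dist (2 * M\<mu> * integral {0..t} (h j)) 0 < \<eta> / 2"
      by (rule tendstoD[OF T]) (use \<eta> in simp)
    then obtain j where j: "\<bar>2 * M\<mu> * integral {0..t} (h j)\<bar> < \<eta> / 2"
      by (auto simp: eventually_sequentially)
    have "\<forall>\<^sub>F k in sequentially. dist (D k) 0 < \<eta> / 2 / real (Suc j)"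
      by (rule tendstoD[OF Dlim]) (use \<eta> in simp)
    then show "\<forall>\<^sub>F k in sequentially. dist (A k) 0 < \<eta>"
    proof (rule eventually_mono)
      fix k assume "dist (D k) 0 < \<eta> / 2 / real (Suc j)"
      then have "D k * real (Suc j) < \<eta> / 2" using D0[of k] by (simp add: field_simps)
      then show "dist (A k) 0 < \<eta>" using Abound[of k j] j A0[of k] by simp
    qed
  qed
  have Xlim: "X \<longlonglongrightarrow> xs"
  proof -
    have "(\<lambda>k. X k - xs) \<longlonglongrightarrow> 0"
    proof (rule Lim_null_comparison)
      show "\<forall>\<^sub>F k in sequentially. norm (X k - xs) \<le> A k * M\<Xi>"
      proof (rule always_eventually, rule allI)
        fix k
        have uk: "continuous_on {0..t} (U k)" using U by blast
        have "norm (X k - xs) = norm (integral {0..t} (\<lambda>s. dd (U k) s *\<^sub>R \<Xi> s))"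
          using K1[OF uk] U by (metis norm_minus_commute)
        also have "\<dots> \<le> integral {0..t} (\<lambda>s. \<bar>dd (U k) s\<bar> * M\<Xi>)"
          by (rule integral_norm_bound_integral[OF int_ddv[OF uk]])
            (use M\<Xi> in \<open>auto intro!: integrable_on_mult_left int_add uk mult_left_mono\<close>)
        also have "\<dots> = A k * M\<Xi>" unfolding A_def
          using integral_mult[OF int_add[OF uk], of M\<Xi>] by (simp add: mult.commute)
        finally show "norm (X k - xs) \<le> A k * M\<Xi>" .
      qed
      show "(\<lambda>k. A k * M\<Xi>) \<longlonglongrightarrow> 0" using tendsto_mult[OF Alim tendsto_const[of M\<Xi>]] by simp
    qed
    then have "(\<lambda>k. (X k - xs) + xs) \<longlonglongrightarrow> 0 + xs" by (intro tendsto_add tendsto_const)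
    then show ?thesis by simp
  qed
  have xbeq: "xbdy = xs" using LIMSEQ_unique[OF X(2) Xlim] .
  have I1: "((\<lambda>s. (\<mu> s * sgn (g s)) *\<^sub>R \<Xi> s) has_integral
      (\<Sum>i\<in>{1..N}. integral {\<sigma> (i-1)..\<sigma> i} (\<lambda>s. (\<mu> s * e i) *\<^sub>R \<Xi> s))) {0..t}"
  proof -
    have cH: "\<forall>v. continuous_on {\<sigma> 0..\<sigma> N} (\<lambda>s. (\<mu> s * v) *\<^sub>R \<Xi> s)"
      using c\<mu> c\<Xi> \<sigma>(2,3) by (auto intro!: continuous_intros)
    show ?thesis using sgn_pw_has_integral[OF \<sigma>(4) fZc wpc cH] \<sigma>(2,3) by simp
  qed
  have I2: "(\<Sum>i\<in>{1..N}. integral {\<sigma> (i-1)..\<sigma> i} (\<lambda>s. (\<mu> s * e i) *\<^sub>R \<Xi> s))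
      = \<epsilon> *\<^sub>R (\<Sum>i\<in>{1..N}. (-1) ^ (i - 1) *\<^sub>R integral {\<sigma> (i - 1)..\<sigma> i} (\<lambda>s. \<mu> s *\<^sub>R \<Xi> s))"
  proof -
    have f: "(\<lambda>s. (\<mu> s * e i) *\<^sub>R \<Xi> s) = (\<lambda>s. e i *\<^sub>R (\<mu> s *\<^sub>R \<Xi> s))" for i by (simp add: mult.commute)
    have "integral {\<sigma> (i-1)..\<sigma> i} (\<lambda>s. (\<mu> s * e i) *\<^sub>R \<Xi> s) = e i *\<^sub>R integral {\<sigma> (i-1)..\<sigma> i} (\<lambda>s. \<mu> s *\<^sub>R \<Xi> s)" for i
      by (simp only: f integral_cmul)
    then have "(\<Sum>i\<in>{1..N}. integral {\<sigma> (i-1)..\<sigma> i} (\<lambda>s. (\<mu> s * e i) *\<^sub>R \<Xi> s))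
        = (\<Sum>i\<in>{1..N}. e i *\<^sub>R integral {\<sigma> (i-1)..\<sigma> i} (\<lambda>s. \<mu> s *\<^sub>R \<Xi> s))" by simp
    also have "\<dots> = \<epsilon> *\<^sub>R (\<Sum>i\<in>{1..N}. (-1) ^ (i - 1) *\<^sub>R integral {\<sigma> (i - 1)..\<sigma> i} (\<lambda>s. \<mu> s *\<^sub>R \<Xi> s))"
      unfolding e_def scaleR_sum_right scaleR_scaleR ..
    finally show ?thesis .
  qed
  have cnx: "(\<lambda>s. \<nu> s *\<^sub>R \<Xi> s) integrable_on {0..t}" using c\<nu> by (rule int_u)
  have "integral {0..t} (\<lambda>s. (\<nu> s + \<mu> s * sgn (g s)) *\<^sub>R \<Xi> s)
      = integral {0..t} (\<lambda>s. \<nu> s *\<^sub>R \<Xi> s + (\<mu> s * sgn (g s)) *\<^sub>R \<Xi> s)" by (simp add: scaleR_add_left)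
  also have "\<dots> = integral {0..t} (\<lambda>s. \<nu> s *\<^sub>R \<Xi> s) + integral {0..t} (\<lambda>s. (\<mu> s * sgn (g s)) *\<^sub>R \<Xi> s)"
    by (rule integral_add[OF cnx has_integral_integrable[OF I1]])
  finally have "xs = chi_vec t x0 + integral {0..t} (\<lambda>s. \<nu> s *\<^sub>R \<Xi> s)
      + \<epsilon> *\<^sub>R (\<Sum>i\<in>{1..N}. (-1) ^ (i - 1) *\<^sub>R integral {\<sigma> (i - 1)..\<sigma> i} (\<lambda>s. \<mu> s *\<^sub>R \<Xi> s))"
    unfolding xs_def using integral_unique[OF I1] I2 by simp
  then show ?thesis using \<sigma>(1-4) xbeq unfolding N_def \<nu>_def \<mu>_def \<Xi>_def
    by (intro exI[of _ \<sigma>] exI[of _ \<epsilon>]) auto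
qed

lemma mpow_scaleR: "mpow (s *\<^sub>R B) k = s ^ k *\<^sub>R mpow (B :: ('n::finite) rmat) k"
  by (induction k) (simp_all add: vec_eq_iff matrix_matrix_mult_def sum_distrib_left algebra_simps)

lemma mpow_bound:
  fixes B :: "('n::finite) rmat"
  defines "m \<equiv> (\<Sum>i\<in>UNIV. \<Sum>j\<in>UNIV. \<bar>B $ i $ j\<bar>)"
  shows "\<bar>mpow B k $ i $ j\<bar> \<le> m ^ k"
proof (induction k arbitrary: i j)
  case 0
  then show ?case by (simp add: mat_def)
next
  case (Suc k)
  have row: "(\<Sum>l\<in>UNIV. \<bar>B $ i $ l\<bar>) \<le> m"
    unfolding m_def by (rule member_le_sum) (auto intro: sum_nonneg)
  have "\<bar>mpow B (Suc k) $ i $ j\<bar> = \<bar>\<Sum>l\<in>UNIV. B $ i $ l * mpow B k $ l $ j\<bar>"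
    by (simp add: matrix_matrix_mult_def)
  also have "\<dots> \<le> (\<Sum>l\<in>UNIV. \<bar>B $ i $ l\<bar> * m ^ k)"
    by (rule order_trans[OF sum_abs]) (auto intro!: sum_mono mult_left_mono Suc simp: abs_mult)
  also have "\<dots> = (\<Sum>l\<in>UNIV. \<bar>B $ i $ l\<bar>) * m ^ k" by (simp add: sum_distrib_right)
  also have "\<dots> \<le> m * m ^ k"
    using row by (intro mult_right_mono) (auto simp: m_def intro!: sum_nonneg zero_le_power)
  finally show ?case by simp
qed

lemma mexp_entry_cont: "continuous_on UNIV (\<lambda>s. mexp (s *\<^sub>R (B :: ('n::finite) rmat)) $ i $ j)"
proof -
  define m where "m = (\<Sum>i\<in>UNIV. \<Sum>j\<in>UNIV. \<bar>B $ i $ j\<bar>)"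
  define c where "c k = mpow B k $ i $ j / fact k" for k
  have m0: "0 \<le> m" unfolding m_def by (auto intro: sum_nonneg)
  have eq: "(\<lambda>s. mexp (s *\<^sub>R B) $ i $ j) = (\<lambda>s. \<Sum>k. c k * s ^ k)"
    unfolding mexp_def c_def by (simp add: mpow_scaleR field_simps)
  have "isCont (\<lambda>s. \<Sum>k. c k * s ^ k) s" for s :: real
  proof (rule isCont_powser)
    define K where "K = \<bar>s\<bar> + 1"
    have K0: "0 \<le> K" unfolding K_def by simp
    show "summable (\<lambda>k. c k * K ^ k)"
    proof (rule summable_comparison_test'[OF summable_exp[of "m * K"]])
      fix k :: nat
      have "norm (c k * K ^ k) = \<bar>mpow B k $ i $ j\<bar> / fact k * K ^ k"
        unfolding c_def using K0 by (simp add: abs_mult)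
      also have "\<dots> \<le> m ^ k / fact k * K ^ k"
        using mpow_bound[of B k i j] K0 unfolding m_def
        by (intro mult_right_mono divide_right_mono) auto
      also have "\<dots> = inverse (fact k) * (m * K) ^ k" by (simp add: field_simps power_mult_distrib)
      finally show "norm (c k * K ^ k) \<le> inverse (fact k) * (m * K) ^ k" .
    qed
    show "norm s < norm K" unfolding K_def by simp
  qed
  then show ?thesis unfolding eq by (intro continuous_at_imp_continuous_on) auto
qed

lemma mexp_vec_cont:
  fixes B :: "('n::finite) rmat"
  shows "continuous_on UNIV (\<lambda>s. inner c (mexp (s *\<^sub>R B) *v v))"
  unfolding inner_vec_def matrix_vector_mult_def
  by (auto intro!: continuous_intros mexp_entry_cont)

lemma integral_reverse:
  fixes \<phi> :: "real \<Rightarrow> real"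
  assumes "continuous_on {0..s} \<phi>"
  shows "integral {0..s} (\<lambda>\<tau>. \<phi> (s - \<tau>)) = integral {0..s} \<phi>"
proof -
  have "(\<phi> has_integral integral {0..s} \<phi>) {0..s}"
    using assms by (intro integrable_integral integrable_continuous_real)
  then have "((\<phi> \<circ> (+) s) has_integral integral {0..s} \<phi>) {-s..0}"
    using has_integral_shift_Icc_real[of \<phi> s _ "-s" 0] by simp
  then have "((\<lambda>x. (\<phi> \<circ> (+) s) (-x)) has_integral integral {0..s} \<phi>) {-0..-(-s)}"
    by (subst has_integral_reflect_real) simp
  then show ?thesis by (simp add: o_def integral_unique)
qed

definition Vset :: "(real \<Rightarrow> real) \<Rightarrow> real \<Rightarrow> real \<Rightarrow> real \<Rightarrow> real set" where
  "Vset F a b s = {v s - integral {0..s} (\<lambda>\<tau>. F (s - \<tau>) * v \<tau>) | v. continuous_on {0..s} v \<and> (\<forall>\<tau>\<in>{0..s}. a \<le> v \<tau> \<and> v \<tau> \<le> b)}"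

lemma Sup_formula:
  fixes F :: "real \<Rightarrow> real"
  assumes cF: "continuous_on UNIV F" and vm: "vmin \<le> vmax" and s: "0 \<le> s"
  shows "Sup (Vset F vmin vmax s) = vmax + integral {0..s} (\<lambda>\<tau>. max (- F (s - \<tau>) * vmin) (- F (s - \<tau>) * vmax))"
proof -
  define \<phi> where "\<phi> \<tau> = max (- F (s - \<tau>) * vmin) (- F (s - \<tau>) * vmax)" for \<tau>
  have cFs: "continuous_on {0..s} (\<lambda>\<tau>. F (s - \<tau>))"
    by (rule continuous_on_compose2[OF cF]) (auto intro!: continuous_intros)
  have c\<phi>: "continuous_on {0..s} \<phi>" unfolding \<phi>_def using cFs by (intro continuous_intros)
  obtain CF where CF: "CF \<ge> 0" "\<forall>\<tau>\<in>{0..s}. norm (F (s - \<tau>)) \<le> CF" using cont_bounded[OF cFs] by blast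
  define mid where "mid = (vmin + vmax) / 2"
  define half where "half = (vmax - vmin) / 2"
  have half0: "0 \<le> half" using vm unfolding half_def by simp
  have \<phi>eq: "\<phi> \<tau> = - F (s - \<tau>) * mid + half * \<bar>F (s - \<tau>)\<bar>" for \<tau>
  proof (cases "F (s - \<tau>) \<ge> 0")
    case True
    have "F (s - \<tau>) * vmin \<le> F (s - \<tau>) * vmax" by (rule mult_left_mono[OF vm True])
    then have "\<phi> \<tau> = - F (s - \<tau>) * vmin" unfolding \<phi>_def by (auto simp: max_def)
    then show ?thesis unfolding mid_def half_def using True by (simp add: abs_of_nonneg field_simps)
  next
    case False
    then have F0: "F (s - \<tau>) \<le> 0" by simp
    have "F (s - \<tau>) * vmax \<le> F (s - \<tau>) * vmin" by (rule mult_left_mono_neg[OF vm F0])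
    then have "\<phi> \<tau> = - F (s - \<tau>) * vmax" unfolding \<phi>_def by (auto simp: max_def)
    then show ?thesis unfolding mid_def half_def using F0 by (simp add: abs_of_nonpos field_simps)
  qed
  have intFv: "(\<lambda>\<tau>. F (s - \<tau>) * v \<tau>) integrable_on {0..s}" if "continuous_on {0..s} v" for v
    using that cFs by (intro integrable_continuous_real continuous_intros)
  show ?thesis unfolding \<phi>_def[symmetric]
  proof (rule cSup_eq_non_empty)
    have "\<exists>v. continuous_on {0..s} v \<and> (\<forall>\<tau>\<in>{0..s}. vmin \<le> v \<tau> \<and> v \<tau> \<le> vmax)"
      using vm by (intro exI[of _ "\<lambda>\<tau>. vmin"]) auto
    then show "Vset F vmin vmax s \<noteq> {}" unfolding Vset_def by blast
  next
    fix x assume "x \<in> Vset F vmin vmax s"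
    then obtain v where v: "x = v s - integral {0..s} (\<lambda>\<tau>. F (s - \<tau>) * v \<tau>)" "continuous_on {0..s} v"
      "\<forall>\<tau>\<in>{0..s}. vmin \<le> v \<tau> \<and> v \<tau> \<le> vmax" unfolding Vset_def by blast
    have "integral {0..s} (\<lambda>\<tau>. - (F (s - \<tau>) * v \<tau>)) \<le> integral {0..s} \<phi>"
    proof (rule integral_le)
      show "(\<lambda>\<tau>. - (F (s - \<tau>) * v \<tau>)) integrable_on {0..s}" using intFv[OF v(2)] by (rule integrable_neg)
      show "\<phi> integrable_on {0..s}" using c\<phi> by (rule integrable_continuous_real)
      fix \<tau> assume \<tau>: "\<tau> \<in> {0..s}"
      show "- (F (s - \<tau>) * v \<tau>) \<le> \<phi> \<tau>"
        using v(3) \<tau> unfolding \<phi>_def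
        by (cases "F (s - \<tau>) \<ge> 0") (auto intro: mult_left_mono mult_left_mono_neg simp: le_max_iff_disj)
    qed
    moreover have "v s \<le> vmax" using v(3) s by auto
    ultimately show "x \<le> vmax + integral {0..s} \<phi>" unfolding v(1) by simp
  next
    fix b assume ub: "\<And>x. x \<in> Vset F vmin vmax s \<Longrightarrow> x \<le> b"
    define hat where "hat j \<tau> = max 0 (1 - real (Suc j) * (s - \<tau>))" for j \<tau>
    define vt where "vt j \<tau> = mid - half * max (-1) (min 1 (real (Suc j) * F (s - \<tau>)))" for j \<tau>
    define vj where "vj j \<tau> = max (vt j \<tau>) (vmin + (vmax - vmin) * hat j \<tau>)" for j \<tau>
    define err where "err j = half * s / real (Suc j) + CF * (vmax - vmin) * integral {0..s} (hat j)" for j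
    have chat: "continuous_on {0..s} (hat j)" for j unfolding hat_def by (intro continuous_intros)
    have cvj: "continuous_on {0..s} (vj j)" for j
      unfolding vj_def vt_def hat_def using cFs by (intro continuous_intros)
    have vtb: "vmin \<le> vt j \<tau> \<and> vt j \<tau> \<le> vmax" for j \<tau>
    proof -
      have kk: "(0::real) < real (Suc j)" by simp
      have c1: "-1 \<le> max (-1) (min 1 (real (Suc j) * F (s - \<tau>)))" "max (-1) (min 1 (real (Suc j) * F (s - \<tau>))) \<le> 1"
        using clamp_bound[OF kk] by auto
      have "half * max (-1) (min 1 (real (Suc j) * F (s - \<tau>))) \<le> half * 1" by (rule mult_left_mono[OF c1(2) half0])
      moreover have "half * (-1) \<le> half * max (-1) (min 1 (real (Suc j) * F (s - \<tau>)))" by (rule mult_left_mono[OF c1(1) half0])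
      moreover have "mid - half = vmin" "mid + half = vmax" unfolding mid_def half_def by (simp_all add: field_simps)
      ultimately show ?thesis unfolding vt_def by linarith
    qed
    have bnd: "\<forall>\<tau>\<in>{0..s}. vmin \<le> vj j \<tau> \<and> vj j \<tau> \<le> vmax" for j
    proof
      fix \<tau> assume \<tau>: "\<tau> \<in> {0..s}"
      have vt: "vmin \<le> vt j \<tau>" "vt j \<tau> \<le> vmax" using vtb by auto
      have h: "0 \<le> hat j \<tau>" "hat j \<tau> \<le> 1" using \<tau> unfolding hat_def by auto
      have "(vmax - vmin) * hat j \<tau> \<le> (vmax - vmin) * 1" using h vm by (intro mult_left_mono) auto
      moreover have "0 \<le> (vmax - vmin) * hat j \<tau>" using h vm by simp
      ultimately show "vmin \<le> vj j \<tau> \<and> vj j \<tau> \<le> vmax" unfolding vj_def using vt by auto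
    qed
    have vjs: "vj j s = vmax" for j
    proof -
      have "vt j s \<le> vmax" using vtb by auto
      then show ?thesis unfolding vj_def hat_def by simp
    qed
    have low: "vmax + integral {0..s} \<phi> - err j \<le> b" for j
    proof -
      have kk: "(0::real) < real (Suc j)" by simp
      have mem: "vj j s - integral {0..s} (\<lambda>\<tau>. F (s - \<tau>) * vj j \<tau>) \<in> Vset F vmin vmax s"
        unfolding Vset_def using cvj bnd by blast
      have pt: "F (s - \<tau>) * vj j \<tau> \<le> - \<phi> \<tau> + half / real (Suc j) + CF * (vmax - vmin) * hat j \<tau>"
        if \<tau>: "\<tau> \<in> {0..s}" for \<tau>
      proof -
        let ?F = "F (s - \<tau>)"
        let ?c = "max (-1) (min 1 (real (Suc j) * ?F))"
        have cb: "\<bar>?F\<bar> - ?F * ?c \<le> 1 / real (Suc j)" using clamp_bound(1)[OF kk] .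
        have "vt j \<tau> \<ge> vmin" using vtb by auto
        moreover have "0 \<le> (vmax - vmin) * hat j \<tau>" using vm unfolding hat_def by simp
        ultimately have d: "0 \<le> vj j \<tau> - vt j \<tau>" "vj j \<tau> - vt j \<tau> \<le> (vmax - vmin) * hat j \<tau>"
          unfolding vj_def by (auto simp: max_def)
        have Fb: "\<bar>?F\<bar> \<le> CF" using CF(2) \<tau> by simp
        have "?F * (vj j \<tau> - vt j \<tau>) \<le> \<bar>?F\<bar> * (vj j \<tau> - vt j \<tau>)" using d by (simp add: mult_right_mono)
        also have "\<dots> \<le> CF * ((vmax - vmin) * hat j \<tau>)" using d Fb by (intro mult_mono) auto
        finally have e1: "?F * (vj j \<tau> - vt j \<tau>) \<le> CF * (vmax - vmin) * hat j \<tau>" by simp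
        have "?F * vt j \<tau> = ?F * mid - half * (?F * ?c)" unfolding vt_def by (simp add: algebra_simps)
        also have "\<dots> \<le> ?F * mid - half * (\<bar>?F\<bar> - 1 / real (Suc j))"
          using cb half0 by (intro diff_left_mono mult_left_mono) auto
        also have "\<dots> = - \<phi> \<tau> + half / real (Suc j)" unfolding \<phi>eq by (simp add: algebra_simps)
        finally have e2: "?F * vt j \<tau> \<le> - \<phi> \<tau> + half / real (Suc j)" .
        have "?F * vj j \<tau> = ?F * vt j \<tau> + ?F * (vj j \<tau> - vt j \<tau>)" by (simp add: algebra_simps)
        then show ?thesis using e1 e2 by linarith
      qed
      have ih: "(hat j) integrable_on {0..s}" using chat by (rule integrable_continuous_real)
      have i\<phi>: "\<phi> integrable_on {0..s}" using c\<phi> by (rule integrable_continuous_real)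
      have a: "(\<lambda>\<tau>. - \<phi> \<tau> + half / real (Suc j)) integrable_on {0..s}"
        by (intro integrable_add integrable_neg i\<phi> integrable_continuous_real continuous_on_const)
      have b: "(\<lambda>\<tau>. CF * (vmax - vmin) * hat j \<tau>) integrable_on {0..s}"
        by (intro integrable_on_mult_right ih)
      have c: "(\<lambda>\<tau>. half / real (Suc j)) integrable_on {0..s}"
        by (rule integrable_continuous_real) (rule continuous_on_const)
      have "integral {0..s} (\<lambda>\<tau>. F (s - \<tau>) * vj j \<tau>) \<le> integral {0..s} (\<lambda>\<tau>. - \<phi> \<tau> + half / real (Suc j) + CF * (vmax - vmin) * hat j \<tau>)"
      proof (rule integral_le[OF intFv[OF cvj]])
        show "(\<lambda>\<tau>. - \<phi> \<tau> + half / real (Suc j) + CF * (vmax - vmin) * hat j \<tau>) integrable_on {0..s}"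
          by (rule integrable_add[OF a b])
        fix \<tau> assume "\<tau> \<in> {0..s}"
        then show "F (s - \<tau>) * vj j \<tau> \<le> - \<phi> \<tau> + half / real (Suc j) + CF * (vmax - vmin) * hat j \<tau>" by (rule pt)
      qed
      also have "\<dots> = - integral {0..s} \<phi> + s * (half / real (Suc j)) + CF * (vmax - vmin) * integral {0..s} (hat j)"
        unfolding integral_add[OF a b] integral_add[OF integrable_neg[OF i\<phi>] c]
        using integral_mult[OF ih, of "CF * (vmax - vmin)"] s by simp
      finally have "vmax + integral {0..s} \<phi> - err j \<le> vj j s - integral {0..s} (\<lambda>\<tau>. F (s - \<tau>) * vj j \<tau>)"
        unfolding vjs err_def by (simp add: algebra_simps)
      also have "\<dots> \<le> b" using ub[OF mem] .
      finally show ?thesis .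
    qed
    have errlim: "err \<longlonglongrightarrow> 0"
    proof -
      define L where "L \<tau> = (if \<tau> = s then 1 else 0::real)" for \<tau>
      have conv: "(\<lambda>j. hat j \<tau>) \<longlonglongrightarrow> L \<tau>" if \<tau>: "\<tau> \<in> {0..s}" for \<tau>
      proof (cases "\<tau> = s")
        case True then show ?thesis unfolding hat_def L_def by simp
      next
        case False
        then have "s - \<tau> > 0" using \<tau> by auto
        then obtain n where n: "n > 0" "inverse (real n) < s - \<tau>" using ex_inverse_of_nat_less by blast
        have "\<forall>\<^sub>F j in sequentially. hat j \<tau> = L \<tau>"
        proof (rule eventually_sequentiallyI[of n])
          fix j assume j: "n \<le> j"
          have "1 < real n * (s - \<tau>)" using n by (simp add: field_simps)
          also have "\<dots> \<le> real (Suc j) * (s - \<tau>)" using j \<open>s - \<tau> > 0\<close> by (intro mult_right_mono) auto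
          finally show "hat j \<tau> = L \<tau>" unfolding hat_def L_def using False by simp
        qed
        then show ?thesis by (rule tendsto_eventually)
      qed
      have "(\<lambda>j. integral {0..s} (hat j)) \<longlonglongrightarrow> integral {0..s} L"
      proof (rule dominated_convergence(2)[where h="\<lambda>\<tau>. 1" and f=hat and g=L])
        show "\<And>k. hat k integrable_on {0..s}" using chat integrable_continuous_real by blast
        show "(\<lambda>\<tau>. 1::real) integrable_on {0..s}" by (rule integrable_continuous_real) (rule continuous_on_const)
        show "\<And>k \<tau>. \<tau> \<in> {0..s} \<Longrightarrow> norm (hat k \<tau>) \<le> 1" by (auto simp: hat_def)
        show "\<And>\<tau>. \<tau> \<in> {0..s} \<Longrightarrow> (\<lambda>k. hat k \<tau>) \<longlonglongrightarrow> L \<tau>" using conv by blast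
      qed
      moreover have "(L has_integral 0) {0..s}"
        by (rule has_integral_spike_finite[where S="{s}", OF _ _ has_integral_0]) (auto simp: L_def)
      ultimately have H: "(\<lambda>j. integral {0..s} (hat j)) \<longlonglongrightarrow> 0" by (simp add: integral_unique)
      have I: "(\<lambda>j. half * s / real (Suc j)) \<longlonglongrightarrow> 0"
        using tendsto_mult[OF tendsto_const[of "half * s"] LIMSEQ_inverse_real_of_nat]
        by (simp add: divide_inverse)
      show ?thesis unfolding err_def using tendsto_add[OF I tendsto_mult[OF tendsto_const H]] by simp
    qed
    have "(\<lambda>j. vmax + integral {0..s} \<phi> - err j) \<longlonglongrightarrow> vmax + integral {0..s} \<phi> - 0"
      by (intro tendsto_intros errlim)
    then show "vmax + integral {0..s} \<phi> \<le> b" using low by (auto intro: LIMSEQ_le_const2)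
  qed
qed

lemma Vset_neg: "uminus ` Vset F a b s = Vset F (-b) (-a) s"
proof
  show "uminus ` Vset F a b s \<subseteq> Vset F (-b) (-a) s"
  proof
    fix x assume "x \<in> uminus ` Vset F a b s"
    then obtain v where v: "x = - (v s - integral {0..s} (\<lambda>\<tau>. F (s - \<tau>) * v \<tau>))" "continuous_on {0..s} v"
      "\<forall>\<tau>\<in>{0..s}. a \<le> v \<tau> \<and> v \<tau> \<le> b" unfolding Vset_def by blast
    have "x = (\<lambda>\<tau>. - v \<tau>) s - integral {0..s} (\<lambda>\<tau>. F (s - \<tau>) * (\<lambda>\<tau>. - v \<tau>) \<tau>)"
      unfolding v(1) by simp
    moreover have "continuous_on {0..s} (\<lambda>\<tau>. - v \<tau>)" using v(2) by (intro continuous_intros)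
    moreover have "\<forall>\<tau>\<in>{0..s}. -b \<le> - v \<tau> \<and> - v \<tau> \<le> -a" using v(3) by auto
    ultimately have "\<exists>w. x = w s - integral {0..s} (\<lambda>\<tau>. F (s - \<tau>) * w \<tau>) \<and> continuous_on {0..s} w \<and> (\<forall>\<tau>\<in>{0..s}. -b \<le> w \<tau> \<and> w \<tau> \<le> -a)"
      by (intro exI[of _ "\<lambda>\<tau>. - v \<tau>"]) auto
    then show "x \<in> Vset F (-b) (-a) s" unfolding Vset_def by blast
  qed
next
  show "Vset F (-b) (-a) s \<subseteq> uminus ` Vset F a b s"
  proof
    fix x assume "x \<in> Vset F (-b) (-a) s"
    then obtain v where v: "x = v s - integral {0..s} (\<lambda>\<tau>. F (s - \<tau>) * v \<tau>)" "continuous_on {0..s} v"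
      "\<forall>\<tau>\<in>{0..s}. -b \<le> v \<tau> \<and> v \<tau> \<le> -a" unfolding Vset_def by blast
    have "x = - ((\<lambda>\<tau>. - v \<tau>) s - integral {0..s} (\<lambda>\<tau>. F (s - \<tau>) * (\<lambda>\<tau>. - v \<tau>) \<tau>))"
      unfolding v(1) by simp
    moreover have "continuous_on {0..s} (\<lambda>\<tau>. - v \<tau>)" using v(2) by (intro continuous_intros)
    moreover have "\<forall>\<tau>\<in>{0..s}. a \<le> - v \<tau> \<and> - v \<tau> \<le> b" using v(3) by auto
    ultimately have "\<exists>w. - x = w s - integral {0..s} (\<lambda>\<tau>. F (s - \<tau>) * w \<tau>) \<and> continuous_on {0..s} w \<and> (\<forall>\<tau>\<in>{0..s}. a \<le> w \<tau> \<and> w \<tau> \<le> b)"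
      by (intro exI[of _ "\<lambda>\<tau>. - v \<tau>"]) auto
    then have "- x \<in> Vset F a b s" unfolding Vset_def by blast
    then show "x \<in> uminus ` Vset F a b s" by (metis image_eqI minus_minus)
  qed
qed

lemma Inf_formula:
  fixes F :: "real \<Rightarrow> real"
  assumes cF: "continuous_on UNIV F" and vm: "vmin \<le> vmax" and s: "0 \<le> s"
  shows "Inf (Vset F vmin vmax s) = vmin - integral {0..s} (\<lambda>\<tau>. max (F (s - \<tau>) * vmax) (F (s - \<tau>) * vmin))"
proof -
  have "Inf (Vset F vmin vmax s) = - Sup (Vset F (-vmax) (-vmin) s)"
    unfolding Inf_real_def Vset_neg ..
  also have "\<dots> = vmin - integral {0..s} (\<lambda>\<tau>. max (F (s - \<tau>) * vmax) (F (s - \<tau>) * vmin))"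
    using Sup_formula[OF cF _ s, of "-vmax" "-vmin"] vm by simp
  finally show ?thesis .
qed

lemma indef_integral_cont:
  fixes \<Phi> :: "real \<Rightarrow> real"
  assumes "continuous_on UNIV \<Phi>"
  shows "continuous_on {0..t} (\<lambda>s. integral {0..s} \<Phi>)"
proof -
  have c: "continuous_on {0..t} \<Phi>" using assms by (rule continuous_on_subset) simp
  have "\<forall>x\<in>{0..t}. ((\<lambda>s. integral {0..s} \<Phi>) has_vector_derivative \<Phi> x) (at x within {0..t})"
    using integral_has_vector_derivative[OF c] by blast
  then show ?thesis
    using continuous_on_eq_continuous_within has_vector_derivative_continuous by blast
qed

lemma u_props:
  fixes A :: "('n::{finite,wellorder}) rmat" and b z0 :: "'n rvec"
  assumes vm: "vmin \<le> vmax"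
  shows "continuous_on {0..t} (umin A b vmin vmax z0) \<and> continuous_on {0..t} (umax A b vmin vmax z0) \<and>
         (\<forall>s\<in>{0..t}. umin A b vmin vmax z0 s \<le> umax A b vmin vmax z0 s)"
proof -
  define FA where "FA r = inner (charcoef A) (mexp (r *\<^sub>R Acon A) *v (bcon :: 'n rvec))" for r
  define E0 where "E0 s = inner (charcoef A) (mexp (s *\<^sub>R Acon A) *v (Mmat A b *v z0))" for s
  have cFA: "continuous_on UNIV FA" unfolding FA_def by (rule mexp_vec_cont)
  have cE0: "continuous_on UNIV E0" unfolding E0_def by (rule mexp_vec_cont)
  have IV: "Ivals A vmin vmax s = Vset FA vmin vmax s" for s
    unfolding Ivals_def Vset_def Ifun_def fker_def FA_def ..
  define \<Phi> where "\<Phi> r = max (- FA r * vmin) (- FA r * vmax)" for r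
  define \<Psi> where "\<Psi> r = max (FA r * vmax) (FA r * vmin)" for r
  have c\<Phi>: "continuous_on UNIV \<Phi>" unfolding \<Phi>_def using cFA by (intro continuous_intros)
  have c\<Psi>: "continuous_on UNIV \<Psi>" unfolding \<Psi>_def using cFA by (intro continuous_intros)
  have umax_eq: "umax A b vmin vmax z0 s = - E0 s + vmax + integral {0..s} \<Phi>" if s: "s \<in> {0..t}" for s
  proof -
    have "Imax A vmin vmax s = vmax + integral {0..s} (\<lambda>\<tau>. \<Phi> (s - \<tau>))"
      unfolding Imax_def IV \<Phi>_def using Sup_formula[OF cFA vm, of s] s by simp
    also have "\<dots> = vmax + integral {0..s} \<Phi>"
      using integral_reverse[of s \<Phi>] continuous_on_subset[OF c\<Phi>] by simp
    finally show ?thesis unfolding umax_def E0_def by simp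
  qed
  have umin_eq: "umin A b vmin vmax z0 s = - E0 s + vmin - integral {0..s} \<Psi>" if s: "s \<in> {0..t}" for s
  proof -
    have "Imin A vmin vmax s = vmin - integral {0..s} (\<lambda>\<tau>. \<Psi> (s - \<tau>))"
      unfolding Imin_def IV \<Psi>_def using Inf_formula[OF cFA vm, of s] s by simp
    also have "\<dots> = vmin - integral {0..s} \<Psi>"
      using integral_reverse[of s \<Psi>] continuous_on_subset[OF c\<Psi>] by simp
    finally show ?thesis unfolding umin_def E0_def by simp
  qed
  have "continuous_on {0..t} (\<lambda>s. - E0 s + vmax + integral {0..s} \<Phi>)"
    using continuous_on_subset[OF cE0] indef_integral_cont[OF c\<Phi>] by (auto intro!: continuous_intros)
  then have c1: "continuous_on {0..t} (umax A b vmin vmax z0)"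
    by (rule continuous_on_eq) (use umax_eq in auto)
  have "continuous_on {0..t} (\<lambda>s. - E0 s + vmin - integral {0..s} \<Psi>)"
    using continuous_on_subset[OF cE0] indef_integral_cont[OF c\<Psi>] by (auto intro!: continuous_intros)
  then have c2: "continuous_on {0..t} (umin A b vmin vmax z0)"
    by (rule continuous_on_eq) (use umin_eq in auto)
  have "umin A b vmin vmax z0 s \<le> umax A b vmin vmax z0 s" if s: "s \<in> {0..t}" for s
  proof -
    have i1: "\<Phi> integrable_on {0..s}" "\<Psi> integrable_on {0..s}"
      using c\<Phi> c\<Psi> by (auto intro!: integrable_continuous_real intro: continuous_on_subset)
    have "0 \<le> integral {0..s} (\<lambda>r. \<Phi> r + \<Psi> r)"
    proof (rule integral_nonneg)
      show "(\<lambda>r. \<Phi> r + \<Psi> r) integrable_on {0..s}" using i1 by (rule integrable_add)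
      fix r show "0 \<le> \<Phi> r + \<Psi> r" unfolding \<Phi>_def \<Psi>_def by (simp add: max_def)
    qed
    then have "0 \<le> integral {0..s} \<Phi> + integral {0..s} \<Psi>" using integral_add[OF i1] by simp
    then show ?thesis using umax_eq[OF s] umin_eq[OF s] vm by simp
  qed
  then show ?thesis using c1 c2 by blast
qed

theorem theorem2:
  fixes A :: "('n::{finite,wellorder}) rmat" and b z0 :: "'n rvec"
    and vmin vmax t :: real and xbdy :: "'n rvec"
  assumes "controllable A b"
    and "distinct_eigenvalues A"
    and "vmin \<le> vmax"
    and "t > 0"
    and "xbdy \<in> frontier (int_reach t (Mmat A b *v z0) (umin A b vmin vmax z0) (umax A b vmin vmax z0))"
  shows "\<exists>\<sigma>::nat \<Rightarrow> real. \<exists>\<epsilon>::real. \<epsilon> \<in> {1, -1} \<and>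
           \<sigma> 0 = 0 \<and> \<sigma> CARD('n) = t \<and> (\<forall>i<CARD('n). \<sigma> i \<le> \<sigma> (Suc i)) \<and>
           xbdy = chi_vec t (Mmat A b *v z0)
             + integral {0..t} (\<lambda>s. ((umax A b vmin vmax z0 s + umin A b vmin vmax z0 s) / 2) *\<^sub>R xi (t - s))
             + \<epsilon> *\<^sub>R (\<Sum>i\<in>{1..CARD('n)}. (-1) ^ (i - 1) *\<^sub>R
                 integral {\<sigma> (i - 1)..\<sigma> i}
                   (\<lambda>s. ((umax A b vmin vmax z0 s - umin A b vmin vmax z0 s) / 2) *\<^sub>R xi (t - s)))"
  using main_general[OF assms(4) _ _ _ assms(5)] u_props[OF assms(3), of t A b z0] by blast

end
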